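(* Let $U=\begin{bmatrix} c_{RR} & c_{LR}\\ c_{RL} & c_{LL}\end{bmatrix}\in \mathrm{U}(2)$ with $c_{RR}\neq 0$, and let $\alpha,\beta\in\mathbb{C}$ with $|\alpha|^2+|\beta|^2=1$. Let $X_t^{(I)}$ be the Type I quantum walk with coin $U$ and initial state $\Psi_0^{(I)}=\alpha|0,S\rangle+\beta|0,L\rangle$. Put $a=\overline{c_{LR}}\,\Delta^{1/2}$, $\rho=\sqrt{1-|a|^2}$, $\phi=(\sigma_R-\sigma_L)/2$ and $$\nu_I(a)=\frac{\mathrm{sgn}(\mathrm{Re}(a))}{\rho}\left\{\sqrt{1-\mathrm{Im}(a)^2}-|\mathrm{Re}(a)|\right\}.$$ Then for every $x\in\{0,1,2,\dots\}$, $$\lim_{t\to\infty}P(X_t^{(I)}=x)=\frac{\mathrm{Re}(a)^2}{1-\mathrm{Im}(a)^2}\,\bigl|\alpha e^{i\phi/2}+\beta e^{-i\phi/2}\nu_I(a)\bigr|^2\,(1+\nu_I(a)^2)\,\nu_I(a)^{2x}.$$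
   Context: For the coin $U$ above: $\Delta=\det U$, $\sigma_R=\arg(c_{RR})$, $\sigma_L=\arg(c_{LL})$ (by unitarity $|c_{LL}|=|c_{RR}|$, $\Delta=e^{i(\sigma_R+\sigma_L)}$, $c_{RL}=-\Delta\overline{c_{LR}}$), and $\Delta^{1/2}:=e^{i(\sigma_R+\sigma_L)/2}$. $\mathrm{sgn}(x)=1,0,-1$ for $x>0,x=0,x<0$. Type I quantum walk: the Hilbert space $\mathcal{H}^{(I)}$ has orthonormal basis $\{|0,S\rangle,|0,L\rangle\}\cup\{|x,R\rangle,|x,L\rangle: x\ge 1\}$; the unitary one-step evolution $W^{(I,U)}$ is defined by $W|0,S\rangle=c_{RR}|1,R\rangle+c_{LR}|0,S\rangle$, $W|0,L\rangle=c_{RL}|1,R\rangle+c_{LL}|0,L\rangle$, and for $x\ge1$: $W|x,R\rangle=c_{RR}|x+1,R\rangle+c_{LR}|x-1,L\rangle$, $W|x,L\rangle=c_{RL}|x+1,R\rangle+c_{LL}|x-1,L\rangle$, where for $x=1$ the vector $|0,L\rangle$ appears as $|x-1,L\rangle$ and $|0,S\rangle$ plays the role of the position-$0$ "$R$"-state. The probability of finding the walker at position $x$ at time $t$ is $P(X_t^{(I)}=x)=\sum_{e}|\langle e,(W^{(I,U)})^t\Psi_0^{(I)}\rangle|^2$, the sum over basis vectors $e$ located at position $x$ (i.e. $|0,S\rangle,|0,L\rangle$ for $x=0$; $|x,R\rangle,|x,L\rangle$ for $x\ge1$). *)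

theory Defs
  imports "HOL-Analysis.Analysis"
begin

definition unitary2 :: "complex \<Rightarrow> complex \<Rightarrow> complex \<Rightarrow> complex \<Rightarrow> bool" where
  "unitary2 cRR cLR cRL cLL \<longleftrightarrow>
     cnj cRR * cRR + cnj cRL * cRL = 1 \<and>
     cnj cLR * cLR + cnj cLL * cLL = 1 \<and>
     cnj cRR * cLR + cnj cRL * cLL = 0 \<and>
     cnj cLR * cRR + cnj cLL * cRL = 0"

text \<open>States of the Type I walk: psi x True is the coefficient of |x,R> for x >= 1 and of
  |0,S> for x = 0; psi x False is the coefficient of |x,L>.
  One step of the evolution W (coefficient form of the action on basis vectors):
  W|0,S> = cRR|1,R> + cLR|0,S>, W|0,L> = cRL|1,R> + cLL|0,S>,
  W|x,R> = cRR|x+1,R> + cLR|x-1,L>, W|x,L> = cRL|x+1,R> + cLL|x-1,L> (x >= 1).\<close>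
definition typeI_step ::
  "complex \<Rightarrow> complex \<Rightarrow> complex \<Rightarrow> complex \<Rightarrow> (nat \<Rightarrow> bool \<Rightarrow> complex) \<Rightarrow> (nat \<Rightarrow> bool \<Rightarrow> complex)" where
  "typeI_step cRR cLR cRL cLL psi = (\<lambda>x c.
     if c then
       (if x = 0 then cLR * psi 0 True + cLL * psi 0 False
        else cRR * psi (x - 1) True + cRL * psi (x - 1) False)
     else cLR * psi (x + 1) True + cLL * psi (x + 1) False)"

definition typeI_init :: "complex \<Rightarrow> complex \<Rightarrow> (nat \<Rightarrow> bool \<Rightarrow> complex)" where
  "typeI_init \<alpha> \<beta> = (\<lambda>x c. if x = 0 then (if c then \<alpha> else \<beta>) else 0)"

definition typeI_prob ::
  "complex \<Rightarrow> complex \<Rightarrow> complex \<Rightarrow> complex \<Rightarrow> complex \<Rightarrow> complex \<Rightarrow> nat \<Rightarrow> nat \<Rightarrow> real" where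
  "typeI_prob cRR cLR cRL cLL \<alpha> \<beta> t x =
     (let psi = (typeI_step cRR cLR cRL cLL ^^ t) (typeI_init \<alpha> \<beta>)
      in (cmod (psi x True))\<^sup>2 + (cmod (psi x False))\<^sup>2)"

definition nu_I :: "complex \<Rightarrow> real" where
  "nu_I a = sgn (Re a) / sqrt (1 - (cmod a)\<^sup>2) * (sqrt (1 - (Im a)\<^sup>2) - \<bar>Re a\<bar>)"

end

theory Submission
  imports Defs "HOL-Computational_Algebra.Formal_Power_Series"
begin

unbundle no vec_syntax
unbundle fps_syntax


definition l1 :: "complex fps \<Rightarrow> bool" where
  "l1 f \<longleftrightarrow> summable (\<lambda>n. norm (f $ n))"

definition ev :: "complex fps \<Rightarrow> complex \<Rightarrow> complex" where
  "ev f z = (\<Sum>n. f $ n * z ^ n)"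

lemma l1_summable_norm:
  assumes "l1 f" "norm z \<le> 1"
  shows "summable (\<lambda>n. norm (f $ n * z ^ n))"
proof (rule summable_comparison_test)
  show "summable (\<lambda>n. norm (f $ n))" using assms(1) by (simp add: l1_def)
  show "\<exists>N. \<forall>n\<ge>N. norm (norm (f $ n * z ^ n)) \<le> norm (f $ n)"
  proof (intro exI allI impI)
    fix n :: nat
    have "norm z ^ n \<le> 1" using assms(2) by (simp add: power_le_one)
    then have "norm (f $ n) * norm z ^ n \<le> norm (f $ n)"
      by (simp add: mult_left_le)
    then show "norm (norm (f $ n * z ^ n)) \<le> norm (f $ n)"
      by (simp add: norm_mult norm_power)
  qed
qed

lemma l1_summable: "l1 f \<Longrightarrow> norm z \<le> 1 \<Longrightarrow> summable (\<lambda>n. f $ n * z ^ n)"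
  by (rule summable_norm_cancel[OF l1_summable_norm])

lemma l1_0[simp]: "l1 0" by (simp add: l1_def)

lemma l1_finite:
  assumes "\<And>n. n > N \<Longrightarrow> f $ n = 0"
  shows "l1 f"
  unfolding l1_def
  by (rule summable_finite[of "{..N}"]) (auto simp: assms)

lemma l1_const[simp]: "l1 (fps_const c)"
  by (rule l1_finite[of 0]) auto

lemma l1_1[simp]: "l1 1"
  by (rule l1_finite[of 0]) auto

lemma l1_X[simp]: "l1 fps_X"
  by (rule l1_finite[of 1]) (auto simp: fps_X_def)

lemma l1_add[simp]: "l1 (f + g)" if "l1 f" "l1 g"
  unfolding l1_def
proof (rule summable_comparison_test[of _ "\<lambda>n. norm (f $ n) + norm (g $ n)"])
  show "\<exists>N. \<forall>n\<ge>N. norm (norm ((f + g) $ n)) \<le> norm (f $ n) + norm (g $ n)"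
    by (simp add: norm_triangle_ineq)
  show "summable (\<lambda>n. norm (f $ n) + norm (g $ n))"
    using that by (intro summable_add) (auto simp: l1_def)
qed

lemma l1_uminus[simp]: "l1 f \<Longrightarrow> l1 (- f)"
  by (simp add: l1_def)

lemma l1_diff[simp]: "l1 f \<Longrightarrow> l1 g \<Longrightarrow> l1 (f - g)"
  using l1_add[of f "-g"] by simp

lemma l1_mult[simp]:
  assumes "l1 f" "l1 g"
  shows "l1 (f * g)"
proof -
  have s: "summable (\<lambda>k. \<Sum>i\<le>k. norm (f $ i) * norm (g $ (k - i)))"
    using summable_Cauchy_product[of "\<lambda>n. norm (f $ n)" "\<lambda>n. norm (g $ n)"] assms
    by (simp add: l1_def)
  show ?thesis
    unfolding l1_def
  proof (rule summable_comparison_test[OF _ s], intro exI[of _ 0] allI impI)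
    fix k :: nat
    have "norm ((f * g) $ k) = norm (\<Sum>i\<le>k. f $ i * g $ (k - i))"
      by (simp add: fps_mult_nth atLeast0AtMost)
    also have "\<dots> \<le> (\<Sum>i\<le>k. norm (f $ i) * norm (g $ (k - i)))"
      by (rule order_trans[OF norm_sum]) (simp add: norm_mult)
    finally show "norm (norm ((f * g) $ k)) \<le> (\<Sum>i\<le>k. norm (f $ i) * norm (g $ (k - i)))"
      by simp
  qed
qed

lemma l1_power[simp]: "l1 f \<Longrightarrow> l1 (f ^ n)"
  by (induction n) auto

lemma ev_add: "l1 f \<Longrightarrow> l1 g \<Longrightarrow> norm z \<le> 1 \<Longrightarrow> ev (f + g) z = ev f z + ev g z"
  unfolding ev_def by (simp add: distrib_right suminf_add[symmetric] l1_summable)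

lemma ev_uminus: "l1 f \<Longrightarrow> norm z \<le> 1 \<Longrightarrow> ev (- f) z = - ev f z"
  unfolding ev_def by (simp add: suminf_minus[symmetric] l1_summable)

lemma ev_diff: "l1 f \<Longrightarrow> l1 g \<Longrightarrow> norm z \<le> 1 \<Longrightarrow> ev (f - g) z = ev f z - ev g z"
  unfolding ev_def by (simp add: left_diff_distrib suminf_diff[symmetric] l1_summable)

lemma ev_finite:
  assumes "\<And>n. n > N \<Longrightarrow> f $ n = 0"
  shows "ev f z = (\<Sum>n\<le>N. f $ n * z ^ n)"
  unfolding ev_def by (rule suminf_finite) (use assms in \<open>auto simp: not_le\<close>)

lemma ev_const[simp]: "ev (fps_const c) z = c"
  by (subst ev_finite[of 0]) auto

lemma ev_1[simp]: "ev 1 z = 1"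
  by (subst ev_finite[of 0]) auto

lemma ev_0[simp]: "ev 0 z = 0"
  by (simp add: ev_def)

lemma ev_X[simp]: "ev fps_X z = z"
  by (subst ev_finite[of 1]) (auto simp: fps_X_def)

lemma ev_mult:
  assumes "l1 f" "l1 g" "norm z \<le> 1"
  shows "ev (f * g) z = ev f z * ev g z"
proof -
  have "ev f z * ev g z = (\<Sum>k. \<Sum>i\<le>k. (f $ i * z ^ i) * (g $ (k - i) * z ^ (k - i)))"
    unfolding ev_def by (rule Cauchy_product) (use assms in \<open>auto intro: l1_summable_norm\<close>)
  also have "\<dots> = (\<Sum>k. (f * g) $ k * z ^ k)"
  proof (rule suminf_cong)
    fix k
    have "(\<Sum>i\<le>k. (f $ i * z ^ i) * (g $ (k - i) * z ^ (k - i)))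
        = (\<Sum>i\<le>k. f $ i * g $ (k - i) * z ^ k)"
    proof (intro sum.cong refl)
      fix i assume "i \<in> {..k}"
      then have "z ^ k = z ^ i * z ^ (k - i)"
        by (simp add: power_add[symmetric])
      then show "(f $ i * z ^ i) * (g $ (k - i) * z ^ (k - i)) = f $ i * g $ (k - i) * z ^ k"
        by (simp add: ac_simps)
    qed
    also have "\<dots> = (f * g) $ k * z ^ k"
      by (simp add: fps_mult_nth atLeast0AtMost sum_distrib_right)
    finally show "(\<Sum>i\<le>k. (f $ i * z ^ i) * (g $ (k - i) * z ^ (k - i))) = (f * g) $ k * z ^ k" .
  qed
  finally show ?thesis by (simp add: ev_def)
qed

lemma ev_power: "l1 f \<Longrightarrow> norm z \<le> 1 \<Longrightarrow> ev (f ^ n) z = ev f z ^ n"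
  by (induction n) (auto simp: ev_mult)


definition geo :: "complex \<Rightarrow> complex fps" where
  "geo l = Abs_fps (\<lambda>n. l ^ n)"

lemma geo_nth: "geo l $ n = l ^ n" by (simp add: geo_def)

lemma geo_inv: "(1 - fps_const l * fps_X) * geo l = 1"
proof (rule fps_ext)
  fix n
  have e: "(1 - fps_const l * fps_X) * geo l = geo l - fps_X * (fps_const l * geo l)"
    by (simp add: algebra_simps)
  show "((1 - fps_const l * fps_X) * geo l) $ n = (1::complex fps) $ n"
  proof (cases n)
    case 0 then show ?thesis unfolding e by (simp add: geo_def)
  next
    case (Suc m)
    then show ?thesis unfolding e by (simp add: geo_def)
  qed
qed

lemma partial_fraction:
  assumes "l \<noteq> m"
  shows "fps_const (l - m) * (geo l * geo m) = fps_const l * geo l - fps_const m * geo m"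
proof -
  let ?E = "(1 - fps_const l * fps_X) * (1 - fps_const m * fps_X)"
  have E0: "?E \<noteq> 0"
  proof
    assume "?E = 0"
    then have "?E $ 0 = 0" by simp
    then show False by simp
  qed
  have "?E * (fps_const (l - m) * (geo l * geo m))
      = fps_const (l - m) * (((1 - fps_const l * fps_X) * geo l) * ((1 - fps_const m * fps_X) * geo m))"
    by (simp only: mult_ac)
  also have "\<dots> = fps_const (l - m)" by (simp only: geo_inv mult_1_right)
  finally have 1: "?E * (fps_const (l - m) * (geo l * geo m)) = fps_const (l - m)" .
  have "?E * (fps_const l * geo l - fps_const m * geo m)
      = fps_const l * (1 - fps_const m * fps_X) * ((1 - fps_const l * fps_X) * geo l)
        - fps_const m * (1 - fps_const l * fps_X) * ((1 - fps_const m * fps_X) * geo m)"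
    by algebra
  also have "\<dots> = fps_const l * (1 - fps_const m * fps_X) - fps_const m * (1 - fps_const l * fps_X)"
    by (simp only: geo_inv mult_1_right)
  also have "\<dots> = fps_const l - fps_const m"
    by (simp add: algebra_simps)
  also have "\<dots> = fps_const (l - m)" by simp
  finally have 2: "?E * (fps_const l * geo l - fps_const m * geo m) = fps_const (l - m)" .
  from 1 2 have "?E * (fps_const (l - m) * (geo l * geo m)) = ?E * (fps_const l * geo l - fps_const m * geo m)"
    by simp
  then show ?thesis using E0 by simp
qed

lemma mult_geo_nth:
  "(h * geo l) $ n = (\<Sum>i\<le>n. h $ i * l ^ (n - i))"
  by (simp add: fps_mult_nth atLeast0AtMost geo_nth)

lemma tail_to_0:
  assumes "l1 h" "norm z \<le> 1"
  shows "(\<lambda>n. (\<Sum>i\<le>n. h $ i * z ^ i) - ev h z) \<longlonglongrightarrow> 0"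
proof -
  have "(\<lambda>n. \<Sum>i\<le>n. h $ i * z ^ i) \<longlonglongrightarrow> ev h z"
    using l1_summable[OF assms] unfolding ev_def
    by (simp add: summable_LIMSEQ' atLeast0AtMost)
  then show ?thesis by (simp add: LIM_zero)
qed

lemma asym:
  fixes h A :: "complex fps" and z0 z1 k :: complex
  assumes h: "l1 h" and n0: "norm z0 = 1" and n1: "norm z1 = 1" and ne: "z0 \<noteq> z1"
    and k: "k \<noteq> 0"
    and eq: "fps_const k * ((1 - fps_const (cnj z0) * fps_X) * (1 - fps_const (cnj z1) * fps_X)) * A = h"
    and h1: "ev h z1 = 0"
  shows "(\<lambda>n. A $ n - (cnj z0 * ev h z0 / (k * (cnj z0 - cnj z1))) * cnj z0 ^ n) \<longlonglongrightarrow> 0"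
proof -
  define l where "l = cnj z0"
  define m where "m = cnj z1"
  have lz: "l * z0 = 1" using complex_norm_square[of z0] n0 by (simp add: l_def mult.commute)
  have mz: "m * z1 = 1" using complex_norm_square[of z1] n1 by (simp add: m_def mult.commute)
  have lm: "l \<noteq> m" using ne unfolding l_def m_def by simp
  have nl: "norm l = 1" using n0 by (simp add: l_def)
  have nm: "norm m = 1" using n1 by (simp add: m_def)
  have keyfps: "fps_const (k * (l - m)) * A = h * (fps_const l * geo l - fps_const m * geo m)"
  proof -
    have "fps_const (k * (l - m)) * A
       = fps_const (l - m) * (geo l * geo m) * (fps_const k * ((1 - fps_const l * fps_X) * (1 - fps_const m * fps_X)) * A)"
    proof -
      have "fps_const (l - m) * (geo l * geo m) * (fps_const k * ((1 - fps_const l * fps_X) * (1 - fps_const m * fps_X)) * A)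
          = fps_const (l - m) * fps_const k * A * (((1 - fps_const l * fps_X) * geo l) * ((1 - fps_const m * fps_X) * geo m))"
        by (simp only: mult_ac)
      also have "\<dots> = fps_const (l - m) * fps_const k * A" by (simp only: geo_inv mult_1_right)
      also have "\<dots> = fps_const (k * (l - m)) * A" by (simp add: mult_ac)
      finally show ?thesis by (rule sym)
    qed
    also have "\<dots> = h * (fps_const (l - m) * (geo l * geo m))"
      using eq unfolding l_def m_def by (simp add: ac_simps)
    also have "\<dots> = h * (fps_const l * geo l - fps_const m * geo m)"
      using partial_fraction[OF lm] by simp
    finally show ?thesis .
  qed
  have coeff: "k * (l - m) * A $ n
      = l ^ Suc n * (\<Sum>i\<le>n. h $ i * z0 ^ i) - m ^ Suc n * (\<Sum>i\<le>n. h $ i * z1 ^ i)" for n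
  proof -
    have "k * (l - m) * A $ n = (h * (fps_const l * geo l - fps_const m * geo m)) $ n"
      using arg_cong[OF keyfps, of "\<lambda>f. f $ n"] by simp
    also have "h * (fps_const l * geo l - fps_const m * geo m) = fps_const l * (h * geo l) - fps_const m * (h * geo m)"
      by (simp only: right_diff_distrib mult.left_commute)
    also have "(fps_const l * (h * geo l) - fps_const m * (h * geo m)) $ n = l * (h * geo l) $ n - m * (h * geo m) $ n"
      by simp
    also have "(h * geo l) $ n = l ^ n * (\<Sum>i\<le>n. h $ i * z0 ^ i)"
    proof -
      have "(h * geo l) $ n = (\<Sum>i\<le>n. h $ i * l ^ (n - i))" by (rule mult_geo_nth)
      also have "\<dots> = (\<Sum>i\<le>n. l ^ n * (h $ i * z0 ^ i))"
      proof (intro sum.cong refl)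
        fix i assume "i \<in> {..n}"
        then have "l ^ n = l ^ (n - i) * l ^ i" by (simp add: power_add[symmetric])
        then have "l ^ n * z0 ^ i = l ^ (n - i) * (l * z0) ^ i" by (simp add: power_mult_distrib)
        then show "h $ i * l ^ (n - i) = l ^ n * (h $ i * z0 ^ i)" using lz by simp
      qed
      finally show ?thesis by (simp add: sum_distrib_left)
    qed
    also have "(h * geo m) $ n = m ^ n * (\<Sum>i\<le>n. h $ i * z1 ^ i)"
    proof -
      have "(h * geo m) $ n = (\<Sum>i\<le>n. h $ i * m ^ (n - i))" by (rule mult_geo_nth)
      also have "\<dots> = (\<Sum>i\<le>n. m ^ n * (h $ i * z1 ^ i))"
      proof (intro sum.cong refl)
        fix i assume "i \<in> {..n}"
        then have "m ^ n = m ^ (n - i) * m ^ i" by (simp add: power_add[symmetric])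
        then have "m ^ n * z1 ^ i = m ^ (n - i) * (m * z1) ^ i" by (simp add: power_mult_distrib)
        then show "h $ i * m ^ (n - i) = m ^ n * (h $ i * z1 ^ i)" using mz by simp
      qed
      finally show ?thesis by (simp add: sum_distrib_left)
    qed
    finally show ?thesis by simp
  qed
  define K where "K = l * ev h z0 / (k * (l - m))"
  have klm: "k * (l - m) \<noteq> 0" using k lm by simp
  have diff: "A $ n - K * l ^ n
     = (l ^ Suc n * ((\<Sum>i\<le>n. h $ i * z0 ^ i) - ev h z0)
        - m ^ Suc n * ((\<Sum>i\<le>n. h $ i * z1 ^ i) - ev h z1)) / (k * (l - m))" for n
  proof -
    have "A $ n = (k * (l - m) * A $ n) / (k * (l - m))" using klm by simp
    then show ?thesis unfolding coeff K_def using h1 klm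
      by (simp add: field_simps)
  qed
  have t0: "(\<lambda>n. l ^ Suc n * ((\<Sum>i\<le>n. h $ i * z0 ^ i) - ev h z0)) \<longlonglongrightarrow> 0"
  proof (rule tendsto_norm_zero_cancel)
    have "(\<lambda>n. norm ((\<Sum>i\<le>n. h $ i * z0 ^ i) - ev h z0)) \<longlonglongrightarrow> 0"
      using tail_to_0[OF h, of z0] n0 by (simp add: tendsto_norm_zero)
    then show "(\<lambda>n. norm (l ^ Suc n * ((\<Sum>i\<le>n. h $ i * z0 ^ i) - ev h z0))) \<longlonglongrightarrow> 0"
      by (simp add: norm_mult norm_power nl)
  qed
  have t1: "(\<lambda>n. m ^ Suc n * ((\<Sum>i\<le>n. h $ i * z1 ^ i) - ev h z1)) \<longlonglongrightarrow> 0"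
  proof (rule tendsto_norm_zero_cancel)
    have "(\<lambda>n. norm ((\<Sum>i\<le>n. h $ i * z1 ^ i) - ev h z1)) \<longlonglongrightarrow> 0"
      using tail_to_0[OF h, of z1] n1 by (simp add: tendsto_norm_zero)
    then show "(\<lambda>n. norm (m ^ Suc n * ((\<Sum>i\<le>n. h $ i * z1 ^ i) - ev h z1))) \<longlonglongrightarrow> 0"
      by (simp add: norm_mult norm_power nm)
  qed
  have "(\<lambda>n. (l ^ Suc n * ((\<Sum>i\<le>n. h $ i * z0 ^ i) - ev h z0)
        - m ^ Suc n * ((\<Sum>i\<le>n. h $ i * z1 ^ i) - ev h z1)) / (k * (l - m))) \<longlonglongrightarrow> (0 - 0) / (k * (l - m))"
    by (intro tendsto_intros t0 t1 klm)
  then have "(\<lambda>n. A $ n - K * l ^ n) \<longlonglongrightarrow> 0" unfolding diff by simp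
  then show ?thesis unfolding K_def l_def m_def .
qed

lemma asym_norm:
  fixes A :: "nat \<Rightarrow> complex"
  assumes "(\<lambda>n. A n - K * l ^ n) \<longlonglongrightarrow> 0" "norm l = 1"
  shows "(\<lambda>n. (norm (A n))\<^sup>2) \<longlonglongrightarrow> (norm K)\<^sup>2"
proof -
  have "(\<lambda>n. norm (A n) - norm K) \<longlonglongrightarrow> 0"
  proof (rule tendsto_sandwich[of "\<lambda>n. - norm (A n - K * l ^ n)" _ _ "\<lambda>n. norm (A n - K * l ^ n)"])
    have nK: "norm (K * l ^ n) = norm K" for n using assms(2) by (simp add: norm_mult norm_power)
    have b: "\<bar>norm (A n) - norm K\<bar> \<le> norm (A n - K * l ^ n)" for n
      using norm_triangle_ineq3[of "A n" "K * l ^ n"] nK[of n] by simp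
    show "\<forall>\<^sub>F n in sequentially. - norm (A n - K * l ^ n) \<le> norm (A n) - norm K"
    proof (rule always_eventually, rule allI)
      fix n show "- norm (A n - K * l ^ n) \<le> norm (A n) - norm K"
        using b[of n] unfolding abs_le_iff by linarith
    qed
    show "\<forall>\<^sub>F n in sequentially. norm (A n) - norm K \<le> norm (A n - K * l ^ n)"
    proof (rule always_eventually, rule allI)
      fix n show "norm (A n) - norm K \<le> norm (A n - K * l ^ n)"
        using b[of n] unfolding abs_le_iff by linarith
    qed
    show "(\<lambda>n. - norm (A n - K * l ^ n)) \<longlonglongrightarrow> 0"
      using tendsto_minus[OF tendsto_norm_zero[OF assms(1)]] by simp
    show "(\<lambda>n. norm (A n - K * l ^ n)) \<longlonglongrightarrow> 0"
      using tendsto_norm_zero[OF assms(1)] .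
  qed
  then have "(\<lambda>n. norm (A n)) \<longlonglongrightarrow> norm K"
    by (simp add: LIM_zero_iff)
  from tendsto_power[OF this, of 2] show ?thesis .
qed


abbreviation bR :: "nat \<Rightarrow> real" where "bR k \<equiv> (1/2::real) gchoose k"

lemma of_real_gchoose: "of_real (x gchoose k) = ((of_real x :: complex) gchoose k)"
  by (simp add: gbinomial_altdef_of_nat of_real_prod)

lemma bR_sign: "k \<ge> 1 \<Longrightarrow> bR k * (-1) ^ k \<le> 0"
proof -
  assume "k \<ge> 1"
  then obtain j where k: "k = Suc j" by (cases k) auto
  have "bR k * (-1) ^ k = pochhammer (-(1/2)) k / fact k"
    by (simp add: gbinomial_pochhammer power_mult_distrib[symmetric])
  also have "pochhammer (-(1/2::real)) k = -(1/2) * pochhammer (1/2) j"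
    unfolding k pochhammer_rec by simp
  also have "pochhammer (1/2::real) j > 0" by (rule pochhammer_pos) simp
  then have "-(1/2) * pochhammer (1/2::real) j / fact k \<le> 0"
    by (simp add: divide_nonpos_pos)
  finally show ?thesis by simp
qed

lemma bR_partial: "(\<Sum>k\<le>m. bR k * (-1) ^ k) \<ge> 0"
proof -
  have "(\<Sum>k\<le>m. bR k * (-1) ^ k) = (-1) ^ m * ((1/2 - 1) gchoose m)"
    by (rule gbinomial_sum_lower_neg)
  also have "\<dots> = (-1) ^ m * ((-1) ^ m * pochhammer (1/2) m / fact m)"
    by (simp add: gbinomial_pochhammer)
  also have "\<dots> = pochhammer (1/2::real) m / fact m"
    by (simp add: power_mult_distrib[symmetric])
  also have "\<dots> \<ge> 0" by (intro divide_nonneg_pos pochhammer_nonneg) auto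
  finally show ?thesis .
qed

lemma abs_bR: "\<bar>bR k\<bar> = (if k = 0 then 2 else 0) - bR k * (-1) ^ k"
proof (cases "k = 0")
  case True then show ?thesis by simp
next
  case False
  then have s: "bR k * (-1) ^ k \<le> 0" using bR_sign by simp
  have "\<bar>bR k\<bar> = \<bar>bR k * (-1) ^ k\<bar>" by (simp add: abs_mult)
  also have "\<dots> = - (bR k * (-1) ^ k)" using s by simp
  finally show ?thesis using False by simp
qed

lemma abs_bR_partial: "(\<Sum>k\<le>m. \<bar>bR k\<bar>) \<le> 2"
proof -
  have "(\<Sum>k\<le>m. \<bar>bR k\<bar>) = (\<Sum>k\<le>m. (if k = 0 then 2 else 0)) - (\<Sum>k\<le>m. bR k * (-1) ^ k)"
    by (simp add: abs_bR sum_subtractf)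
  also have "(\<Sum>k\<le>m. (if k = 0 then 2 else (0::real))) = 2"
    by (simp add: sum.delta)
  finally show ?thesis using bR_partial[of m] by simp
qed

lemma summable_abs_bR: "summable (\<lambda>k. \<bar>bR k\<bar>)"
  by (rule bounded_imp_summable[of _ 2]) (auto intro: abs_bR_partial)

lemma suminf_abs_bR: "(\<Sum>k. \<bar>bR k\<bar>) \<le> 2"
proof (rule suminf_le_const[OF summable_abs_bR])
  fix n :: nat
  show "(\<Sum>k<n. \<bar>bR k\<bar>) \<le> 2"
  proof (cases n)
    case 0 then show ?thesis by simp
  next
    case (Suc m)
    then have "{..<n} = {..m}" by auto
    then show ?thesis using abs_bR_partial[of m] by simp
  qed
qed

definition Tb :: "complex fps" where "Tb = fps_binomial (1/2)"

lemma Tb_nth: "Tb $ k = of_real (bR k)"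
  by (simp add: Tb_def of_real_gchoose)

lemma Tb_sq: "Tb * Tb = 1 + fps_X"
  by (simp add: Tb_def fps_binomial_add_mult[symmetric] fps_binomial_1)

lemma l1_Tb: "l1 Tb"
  unfolding l1_def Tb_nth using summable_abs_bR by simp

lemma Re_ev_Tb:
  assumes "norm u \<le> 1"
  shows "Re (ev Tb u) \<ge> 0"
proof -
  have sn: "summable (\<lambda>n. norm (Tb $ n * u ^ n))" by (rule l1_summable_norm[OF l1_Tb assms])
  have s: "summable (\<lambda>n. Tb $ n * u ^ n)" by (rule l1_summable[OF l1_Tb assms])
  have sn1: "summable (\<lambda>n. norm (Tb $ Suc n * u ^ Suc n))"
    using summable_ignore_initial_segment[OF sn, of 1] by simp
  have e: "ev Tb u - 1 = (\<Sum>n. Tb $ Suc n * u ^ Suc n)"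
    unfolding ev_def using suminf_split_head[OF s] by (simp add: Tb_nth)
  have "norm (ev Tb u - 1) \<le> (\<Sum>n. norm (Tb $ Suc n * u ^ Suc n))"
    unfolding e by (rule summable_norm[OF sn1])
  also have "\<dots> \<le> (\<Sum>n. \<bar>bR (Suc n)\<bar>)"
  proof (rule suminf_le)
    show "summable (\<lambda>n. \<bar>bR (Suc n)\<bar>)"
      using summable_ignore_initial_segment[OF summable_abs_bR, of 1] by simp
    show "summable (\<lambda>n. norm (Tb $ Suc n * u ^ Suc n))" by (rule sn1)
    fix n
    have "norm u ^ Suc n \<le> 1" using assms by (intro power_le_one) auto
    then have "\<bar>bR (Suc n)\<bar> * norm u ^ Suc n \<le> \<bar>bR (Suc n)\<bar>"
      by (simp add: mult_left_le)
    then show "norm (Tb $ Suc n * u ^ Suc n) \<le> \<bar>bR (Suc n)\<bar>"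
      by (simp add: Tb_nth norm_mult norm_power)
  qed
  also have "\<dots> = (\<Sum>n. \<bar>bR n\<bar>) - 1"
    using suminf_split_head[OF summable_abs_bR] by simp
  also have "\<dots> \<le> 1" using suminf_abs_bR by simp
  finally have "norm (ev Tb u - 1) \<le> 1" .
  moreover have "- Re (ev Tb u - 1) \<le> norm (ev Tb u - 1)"
    using abs_Re_le_cmod[of "ev Tb u - 1"] by linarith
  ultimately show ?thesis by simp
qed


definition sub :: "complex fps \<Rightarrow> complex \<Rightarrow> complex fps" where
  "sub f k = Abs_fps (\<lambda>n. if even n then f $ (n div 2) * k ^ (n div 2) else 0)"

lemma sub_nth: "sub f k $ n = (if even n then f $ (n div 2) * k ^ (n div 2) else 0)"
  by (simp add: sub_def)

lemma sub_compose: "sub f k = f oo (fps_const k * fps_X ^ 2)"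
proof (rule fps_ext)
  fix n
  have "(f oo (fps_const k * fps_X ^ 2)) $ n = (\<Sum>i = 0..n. f $ i * ((fps_const k * fps_X ^ 2) ^ i $ n))"
    by (simp add: fps_compose_nth)
  also have "\<dots> = (\<Sum>i = 0..n. (if i = n div 2 \<and> even n then f $ i * k ^ i else 0))"
  proof (intro sum.cong refl)
    fix i
    have eq: "(fps_const k * fps_X ^ 2) ^ i = fps_const (k ^ i) * fps_X ^ (2 * i)"
      by (simp only: power_mult_distrib fps_const_power power_mult)
    have pw: "(fps_const k * fps_X ^ 2) ^ i $ n = (if n = 2 * i then k ^ i else 0)"
      unfolding eq by simp
    have "(n = 2 * i) = (i = n div 2 \<and> even n)" by auto
    then show "f $ i * ((fps_const k * fps_X ^ 2) ^ i $ n) = (if i = n div 2 \<and> even n then f $ i * k ^ i else 0)"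
      unfolding pw by simp
  qed
  also have "\<dots> = (if even n then f $ (n div 2) * k ^ (n div 2) else 0)"
    by (cases "even n") (simp_all add: sum.delta')
  finally show "sub f k $ n = (f oo (fps_const k * fps_X ^ 2)) $ n" by (simp add: sub_nth)
qed

lemma sub_mult: "sub (f * g) k = sub f k * sub g k"
  unfolding sub_compose by (rule fps_compose_mult_distrib) simp

lemma sub_1X: "sub (1 + fps_X) k = 1 + fps_const k * fps_X ^ 2"
proof (rule fps_ext)
  fix n
  show "sub (1 + fps_X) k $ n = (1 + fps_const k * fps_X ^ 2) $ n"
  proof (cases "even n")
    case True
    then obtain j where n: "n = 2 * j" by auto
    show ?thesis unfolding sub_nth n
      by (cases j) (auto simp: fps_X_nth)
  next
    case False
    then have "n \<noteq> 0" "n \<noteq> 2" by (auto simp: odd_pos)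
    then show ?thesis using False unfolding sub_nth by (auto simp: fps_X_nth odd_pos)
  qed
qed

lemma sub_sums:
  assumes "l1 f" "norm (k * z ^ 2) \<le> 1"
  shows "(\<lambda>n. sub f k $ n * z ^ n) sums ev f (k * z ^ 2)"
proof -
  have s: "(\<lambda>n. f $ n * (k * z ^ 2) ^ n) sums ev f (k * z ^ 2)"
    unfolding ev_def using l1_summable[OF assms] by (simp add: summable_sums)
  have "(\<lambda>n. sub f k $ (2 * n) * z ^ (2 * n)) = (\<lambda>n. f $ n * (k * z ^ 2) ^ n)"
    by (simp add: sub_nth power_mult_distrib power_mult[symmetric] mult_ac)
  with s have "(\<lambda>n. sub f k $ (2 * n) * z ^ (2 * n)) sums ev f (k * z ^ 2)" by simp
  then show ?thesis
    by (subst (asm) sums_mono_reindex[of "\<lambda>n. 2 * n"])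
       (auto simp: strict_mono_def sub_nth elim!: oddE)
qed

lemma ev_sub: "l1 f \<Longrightarrow> norm (k * z ^ 2) \<le> 1 \<Longrightarrow> ev (sub f k) z = ev f (k * z ^ 2)"
  unfolding ev_def[of "sub f k"] using sub_sums by (simp add: sums_iff)

lemma l1_sub:
  assumes "l1 f" "norm k = 1"
  shows "l1 (sub f k)"
proof -
  have "(\<lambda>n. norm (f $ n)) sums (\<Sum>n. norm (f $ n))"
    using assms(1) by (simp add: l1_def summable_sums)
  moreover have "(\<lambda>n. norm (sub f k $ (2 * n))) = (\<lambda>n. norm (f $ n))"
    using assms(2) by (simp add: sub_nth norm_mult norm_power)
  ultimately have "(\<lambda>n. norm (sub f k $ (2 * n))) sums (\<Sum>n. norm (f $ n))" by simp
  then have "(\<lambda>n. norm (sub f k $ n)) sums (\<Sum>n. norm (f $ n))"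
    by (subst (asm) sums_mono_reindex[of "\<lambda>n. 2 * n"])
       (auto simp: strict_mono_def sub_nth elim!: oddE)
  then show ?thesis by (auto simp: l1_def sums_iff)
qed


lemma l1_shift: "l1 f \<Longrightarrow> l1 (fps_shift k f)"
  unfolding l1_def fps_shift_nth by (rule summable_ignore_initial_segment[where f="\<lambda>n. norm (f $ n)"])

lemma X_shift: "f $ 0 = 0 \<Longrightarrow> fps_X * fps_shift 1 f = (f :: complex fps)"
proof (rule fps_ext)
  fix n assume "f $ 0 = 0"
  then show "(fps_X * fps_shift 1 f) $ n = f $ n" by (cases n) auto
qed

lemma re_sqrt:
  fixes u y :: complex
  assumes "u ^ 2 = y" "Re y \<ge> 0" "Re u \<ge> 0"
  shows "\<bar>Im u\<bar> \<le> Re u"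
proof -
  have "Re y = (Re u)^2 - (Im u)^2" using assms(1) by (auto simp: power2_eq_square)
  then have "(Im u)^2 \<le> (Re u)^2" using assms(2) by simp
  then have "\<bar>Im u\<bar> \<le> \<bar>Re u\<bar>" using abs_le_square_iff[of "Im u" "Re u"] by simp
  then show ?thesis using assms(3) by simp
qed

lemma re_prod:
  fixes u v :: complex
  assumes "\<bar>Im u\<bar> \<le> Re u" "\<bar>Im v\<bar> \<le> Re v"
  shows "Re (u * v) \<ge> 0"
proof -
  have "Im u * Im v \<le> \<bar>Im u\<bar> * \<bar>Im v\<bar>" by (simp add: abs_mult[symmetric])
  also have "\<dots> \<le> Re u * Re v" using assms by (intro mult_mono) auto
  finally show ?thesis by simp
qed

context
  fixes a :: complex
begin

definition "A2 = (cmod a)^2"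
definition "ccc = sqrt (1 - A2)"
definition "w1 = Complex (1 - 2 * A2) (2 * cmod a * ccc)"
definition "w2 = cnj w1"
definition "S1 = sub Tb (- w1)"
definition "S2 = sub Tb (- w2)"
definition "Sq = S1 * S2"
definition "Ff = fps_const (1 / (2 * a)) * fps_shift 1 (Sq - 1 + fps_X ^ 2)"

lemma A2_eq: "a * cnj a = of_real A2"
  unfolding A2_def by (rule complex_norm_square[symmetric])

lemma w_prod: assumes "cmod a \<le> 1" shows "w1 * w2 = 1"
proof -
  have "A2 \<le> 1" using assms by (simp add: A2_def power_le_one)
  then have c2: "ccc^2 = 1 - A2" by (simp add: ccc_def)
  have "(2 * cmod a * ccc)^2 = 4 * A2 * ccc^2" by (simp add: A2_def power_mult_distrib)
  moreover have "(1 - 2 * A2)^2 + 4 * A2 * ccc^2 = 1"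
    unfolding c2 by (simp add: power2_eq_square algebra_simps)
  ultimately have e: "(1 - 2 * A2)^2 + (2 * cmod a * ccc)^2 = 1" by simp
  have "w1 * w2 = complex_of_real ((Re w1)^2 + (Im w1)^2)"
    unfolding w2_def by (rule complex_mult_cnj)
  also have "(Re w1)^2 + (Im w1)^2 = 1" using e by (simp add: w1_def)
  finally show ?thesis by simp
qed

lemma w_sum: "w1 + w2 = 2 - 4 * (a * cnj a)"
  unfolding A2_eq w2_def w1_def complex_eq_iff by simp

lemma norm_w1: assumes "cmod a \<le> 1" shows "norm w1 = 1"
proof -
  have "w1 * cnj w1 = 1" using w_prod[OF assms] by (simp add: w2_def)
  then have "complex_of_real ((norm w1)^2) = 1" using complex_norm_square[of w1] by simp
  then have "(norm w1)^2 = 1" by (simp only: of_real_eq_1_iff)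
  then have "norm w1 = 1 \<or> norm w1 = -1" by (simp add: power2_eq_1_iff)
  then show ?thesis using norm_ge_zero[of w1] by linarith
qed

lemma norm_w2: assumes "cmod a \<le> 1" shows "norm w2 = 1"
  using norm_w1[OF assms] by (simp add: w2_def)

lemma S1_sq: "S1 * S1 = 1 - fps_const w1 * fps_X ^ 2"
  unfolding S1_def sub_mult[symmetric] Tb_sq sub_1X by simp

lemma S2_sq: "S2 * S2 = 1 - fps_const w2 * fps_X ^ 2"
  unfolding S2_def sub_mult[symmetric] Tb_sq sub_1X by simp

lemma Sq_0: "Sq $ 0 = 1"
  by (simp add: Sq_def S1_def S2_def sub_nth Tb_nth)

lemma l1_S1: "cmod a \<le> 1 \<Longrightarrow> l1 S1"
  unfolding S1_def by (rule l1_sub[OF l1_Tb]) (simp add: norm_w1)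

lemma l1_S2: "cmod a \<le> 1 \<Longrightarrow> l1 S2"
  unfolding S2_def by (rule l1_sub[OF l1_Tb]) (simp add: norm_w2)

lemma l1_Sq: "cmod a \<le> 1 \<Longrightarrow> l1 Sq"
  unfolding Sq_def by (simp add: l1_S1 l1_S2)

lemma l1_Ff: "cmod a \<le> 1 \<Longrightarrow> l1 Ff"
proof -
  assume "cmod a \<le> 1"
  then have "l1 Sq" by (rule l1_Sq)
  then have "l1 (Sq - 1 + fps_X ^ 2)" by simp
  then have "l1 (fps_shift 1 (Sq - 1 + fps_X ^ 2))" by (rule l1_shift)
  then show ?thesis unfolding Ff_def by simp
qed

end


context
  fixes a :: complex
begin

lemma quad_generic:
  fixes X F S A B W1 W2 :: "'a::comm_ring_1"
  assumes "2 * A * X * F = S - 1 + X^2" "S * S = (1 - W1 * X^2) * (1 - W2 * X^2)" "W1 * W2 = 1" "W1 + W2 = 2 - 4 * (A * B)"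
  shows "4 * A * X * (A * X * F^2 + (1 - X^2) * F - B * X) = 0"
proof -
  have "4 * A * X * (A * X * F^2 + (1 - X^2) * F - B * X)
      = (2 * A * X * F)^2 + 2 * (1 - X^2) * (2 * A * X * F) - 4 * (A * B) * X^2"
    by (simp add: algebra_simps power2_eq_square)
  also have "\<dots> = (S - 1 + X^2)^2 + 2 * (1 - X^2) * (S - 1 + X^2) - 4 * (A * B) * X^2"
    unfolding assms(1) ..
  also have "\<dots> = S * S - (1 - X^2)^2 - 4 * (A * B) * X^2"
    by (simp add: algebra_simps power2_eq_square)
  also have "\<dots> = (2 - 4 * (A * B) - (W1 + W2)) * X^2 + (W1 * W2 - 1) * X^4"
    unfolding assms(2) by (simp add: algebra_simps power2_eq_square power4_eq_xxxx)
  also have "\<dots> = 0" unfolding assms(3,4) by simp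
  finally show ?thesis .
qed

lemma Ff_quad:
  assumes "cmod a \<le> 1" "a \<noteq> 0"
  shows "fps_const a * fps_X * (Ff a) ^ 2 + (1 - fps_X ^ 2) * (Ff a) - fps_const (cnj a) * fps_X = 0"
proof -
  let ?Y = "Sq a - 1 + fps_X ^ 2"
  have Y0: "?Y $ 0 = 0" using Sq_0 by simp
  have XF: "2 * fps_const a * fps_X * (Ff a) = ?Y"
  proof -
    have "2 * fps_const a * fps_X * (Ff a) = (fps_const (2 * a) * fps_const (1 / (2 * a))) * (fps_X * fps_shift 1 ?Y)"
      unfolding Ff_def by (simp only: mult_ac fps_const_mult[symmetric] numeral_fps_const)
    also have "fps_const (2 * a) * fps_const (1 / (2 * a)) = (1 :: complex fps)"
      using assms(2) by (simp only: fps_const_mult) simp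
    also have "1 * (fps_X * fps_shift 1 ?Y) = ?Y" using X_shift[OF Y0] by simp
    finally show ?thesis .
  qed
  have SS: "Sq a * Sq a = (1 - fps_const (w1 a) * fps_X ^ 2) * (1 - fps_const (w2 a) * fps_X ^ 2)"
    unfolding Sq_def S1_sq[symmetric] S2_sq[symmetric] by (simp only: mult_ac)
  have wp: "fps_const (w1 a) * fps_const (w2 a) = (1 :: complex fps)"
    using w_prod[OF assms(1)] by (simp only: fps_const_mult) simp
  have ws: "fps_const (w1 a) + fps_const (w2 a) = 2 - 4 * (fps_const a * fps_const (cnj a))"
  proof -
    have "fps_const (w1 a) + fps_const (w2 a) = fps_const (2 - 4 * (a * cnj a))"
      using w_sum[of a] by (simp only: fps_const_add)
    also have "\<dots> = 2 - 4 * (fps_const a * fps_const (cnj a))"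
      by (simp only: fps_const_sub fps_const_mult numeral_fps_const)
    finally show ?thesis .
  qed
  have "4 * fps_const a * fps_X * (fps_const a * fps_X * (Ff a) ^ 2 + (1 - fps_X ^ 2) * (Ff a) - fps_const (cnj a) * fps_X) = 0"
    by (rule quad_generic[OF XF SS wp ws])
  moreover have "4 * fps_const a * fps_X \<noteq> (0 :: complex fps)"
    using assms(2) by (simp only: mult_eq_0_iff numeral_fps_const fps_const_eq_0_iff fps_X_neq_zero) simp
  ultimately show ?thesis by (simp only: mult_eq_0_iff) simp
qed

lemma ev_Sq:
  assumes "cmod a \<le> 1" "norm z \<le> 1"
  shows "ev (Sq a) z = ev Tb (- (w1 a) * z ^ 2) * ev Tb (- (w2 a) * z ^ 2)"
proof -
  have n1: "norm (- (w1 a) * z ^ 2) \<le> 1" using assms norm_w1 by (simp add: norm_mult norm_power power_le_one)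
  have n2: "norm (- (w2 a) * z ^ 2) \<le> 1" using assms norm_w2 by (simp add: norm_mult norm_power power_le_one)
  show ?thesis unfolding Sq_def
    using ev_mult[OF l1_S1[OF assms(1)] l1_S2[OF assms(1)] assms(2)]
      ev_sub[OF l1_Tb n1] ev_sub[OF l1_Tb n2] by (simp add: S1_def S2_def)
qed

lemma ev_Sq_sq:
  assumes "cmod a \<le> 1" "norm z \<le> 1"
  shows "(ev (Sq a) z) ^ 2 = (1 - (w1 a) * z ^ 2) * (1 - (w2 a) * z ^ 2)"
proof -
  have "(ev (Sq a) z) ^ 2 = ev ((Sq a) * (Sq a)) z" using ev_mult[OF l1_Sq l1_Sq] assms by (simp add: power2_eq_square)
  also have "(Sq a) * (Sq a) = (1 - fps_const (w1 a) * fps_X ^ 2) * (1 - fps_const (w2 a) * fps_X ^ 2)"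
    unfolding Sq_def S1_sq[symmetric] S2_sq[symmetric] by (simp add: mult_ac)
  also have "ev \<dots> z = (1 - (w1 a) * z ^ 2) * (1 - (w2 a) * z ^ 2)"
    using assms by (simp add: ev_mult ev_diff ev_power)
  finally show ?thesis .
qed

lemma Re_ev_Sq:
  assumes "cmod a \<le> 1" "norm z \<le> 1"
  shows "Re (ev (Sq a) z) \<ge> 0"
proof -
  have n1: "norm (- (w1 a) * z ^ 2) \<le> 1" using assms norm_w1 by (simp add: norm_mult norm_power power_le_one)
  have n2: "norm (- (w2 a) * z ^ 2) \<le> 1" using assms norm_w2 by (simp add: norm_mult norm_power power_le_one)
  have sq1: "(ev Tb (- (w1 a) * z ^ 2)) ^ 2 = 1 - (w1 a) * z ^ 2"
  proof -
    have "(ev Tb (- (w1 a) * z ^ 2)) ^ 2 = ev (Tb * Tb) (- (w1 a) * z ^ 2)"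
      using ev_mult[OF l1_Tb l1_Tb n1] by (simp add: power2_eq_square)
    also have "\<dots> = 1 - (w1 a) * z ^ 2" unfolding Tb_sq using n1 by (simp add: ev_add)
    finally show ?thesis .
  qed
  have sq2: "(ev Tb (- (w2 a) * z ^ 2)) ^ 2 = 1 - (w2 a) * z ^ 2"
  proof -
    have "(ev Tb (- (w2 a) * z ^ 2)) ^ 2 = ev (Tb * Tb) (- (w2 a) * z ^ 2)"
      using ev_mult[OF l1_Tb l1_Tb n2] by (simp add: power2_eq_square)
    also have "\<dots> = 1 - (w2 a) * z ^ 2" unfolding Tb_sq using n2 by (simp add: ev_add)
    finally show ?thesis .
  qed
  have r1: "Re (1 - (w1 a) * z ^ 2) \<ge> 0"
    using complex_Re_le_cmod[of "(w1 a) * z ^ 2"] n1 by simp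
  have r2: "Re (1 - (w2 a) * z ^ 2) \<ge> 0"
    using complex_Re_le_cmod[of "(w2 a) * z ^ 2"] n2 by simp
  have i1: "\<bar>Im (ev Tb (- (w1 a) * z ^ 2))\<bar> \<le> Re (ev Tb (- (w1 a) * z ^ 2))"
    by (rule re_sqrt[OF sq1 r1 Re_ev_Tb[OF n1]])
  have i2: "\<bar>Im (ev Tb (- (w2 a) * z ^ 2))\<bar> \<le> Re (ev Tb (- (w2 a) * z ^ 2))"
    by (rule re_sqrt[OF sq2 r2 Re_ev_Tb[OF n2]])
  show ?thesis unfolding ev_Sq[OF assms] by (rule re_prod[OF i1 i2])
qed

lemma ev_Ff:
  assumes "cmod a \<le> 1" "a \<noteq> 0" "norm z \<le> 1" "z \<noteq> 0"
  shows "ev (Ff a) z = (ev (Sq a) z - 1 + z ^ 2) / (2 * a * z)"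
proof -
  let ?Y = "(Sq a) - 1 + fps_X ^ 2"
  let ?Z = "fps_shift 1 ?Y"
  have Y0: "?Y $ 0 = 0" using Sq_0 by simp
  have lY: "l1 ?Y" using assms(1) by (simp add: l1_Sq)
  have lZ: "l1 ?Z" by (rule l1_shift[OF lY])
  have "ev ?Y z = z * ev ?Z z"
    using ev_mult[OF l1_X lZ assms(3)] X_shift[OF Y0] by simp
  moreover have "ev ?Y z = ev (Sq a) z - 1 + z ^ 2"
    using assms(1,3) by (simp add: ev_add ev_diff ev_power l1_Sq)
  moreover have "ev (Ff a) z = ev ?Z z / (2 * a)"
    unfolding Ff_def using ev_mult[OF l1_const lZ assms(3)] by simp
  ultimately have "ev (Sq a) z - 1 + z ^ 2 = z * (2 * a * ev (Ff a) z)"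
    using assms(2) by simp
  then show ?thesis using assms(2,4) by (simp add: field_simps)
qed

end


lemma ev_Sq_root:
  assumes a1: "cmod a \<le> 1" and nz: "norm z \<le> 1"
    and root: "1 + (a - cnj a) * z - z ^ 2 = 0"
    and sgn: "Re a \<noteq> 0 \<Longrightarrow> Re (complex_of_real (Re a) * z) * \<sigma> > 0"
    and \<sigma>: "\<sigma> = 1 \<or> \<sigma> = -1"
  shows "ev (Sq a) z = of_real \<sigma> * (2 * of_real (Re a) * z)"
proof -
  let ?u = "ev (Sq a) z"
  have "?u ^ 2 = (1 - w1 a * z ^ 2) * (1 - w2 a * z ^ 2)" by (rule ev_Sq_sq[OF a1 nz])
  also have "\<dots> = 1 - (w1 a + w2 a) * z ^ 2 + (w1 a * w2 a) * z ^ 4"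
    by (simp add: algebra_simps power2_eq_square power4_eq_xxxx)
  also have "\<dots> = (1 - z ^ 2) ^ 2 + 4 * (a * cnj a) * z ^ 2"
    unfolding w_sum w_prod[OF a1] by (simp add: algebra_simps power2_eq_square power4_eq_xxxx)
  also have "1 - z ^ 2 = - ((a - cnj a) * z)" using root by (simp add: algebra_simps)
  also have "(- ((a - cnj a) * z)) ^ 2 + 4 * (a * cnj a) * z ^ 2 = ((a + cnj a) * z) ^ 2"
    by (simp add: algebra_simps power2_eq_square)
  also have "a + cnj a = 2 * of_real (Re a)" by (simp add: complex_add_cnj)
  finally have sq: "?u ^ 2 = (2 * of_real (Re a) * z) ^ 2" by (simp add: mult_ac)
  then have "?u = 2 * of_real (Re a) * z \<or> ?u = - (2 * of_real (Re a) * z)"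
    by (simp add: power2_eq_iff)
  moreover have "Re ?u \<ge> 0" by (rule Re_ev_Sq[OF a1 nz])
  ultimately show ?thesis
  proof (cases "Re a = 0")
    case True
    then show ?thesis using sq by simp
  next
    case False
    have pos: "Re (complex_of_real (Re a) * z) * \<sigma> > 0" using sgn[OF False] .
    from \<sigma> show ?thesis
    proof
      assume s1: "\<sigma> = 1"
      have "?u \<noteq> - (2 * of_real (Re a) * z)"
      proof
        assume "?u = - (2 * of_real (Re a) * z)"
        then have "Re ?u = - 2 * Re (complex_of_real (Re a) * z)" by simp
        with pos s1 \<open>Re ?u \<ge> 0\<close> show False by simp
      qed
      with \<open>?u = _ \<or> ?u = _\<close> s1 show ?thesis by simp
    next
      assume s1: "\<sigma> = -1"
      have "?u \<noteq> 2 * of_real (Re a) * z"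
      proof
        assume "?u = 2 * of_real (Re a) * z"
        then have "Re ?u = 2 * Re (complex_of_real (Re a) * z)" by simp
        with pos s1 \<open>Re ?u \<ge> 0\<close> show False by simp
      qed
      with \<open>?u = _ \<or> ?u = _\<close> s1 show ?thesis by simp
    qed
  qed
qed

definition s0 :: "complex \<Rightarrow> real" where "s0 a = sqrt (1 - (Im a)^2)"
definition z0 :: "complex \<Rightarrow> complex" where
  "z0 a = Complex (if Re a \<ge> 0 then s0 a else - s0 a) (Im a)"
definition z1 :: "complex \<Rightarrow> complex" where
  "z1 a = Complex (if Re a \<ge> 0 then - s0 a else s0 a) (Im a)"

context
  fixes a :: complex
  assumes a1: "cmod a < 1"
begin

lemma Im_sq_lt: "(Im a)^2 < 1"
proof -
  have "(Im a)^2 \<le> (cmod a)^2" by (simp add: cmod_def)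
  also have "\<dots> < 1" using a1 by (simp add: power_less_one_iff abs_less_iff)
  finally show ?thesis .
qed

lemma s0_pos: "s0 a > 0"
  using Im_sq_lt by (simp add: s0_def)

lemma s0_sq: "(s0 a)^2 = 1 - (Im a)^2"
  using Im_sq_lt by (simp add: s0_def)

lemma norm_z0: "norm (z0 a) = 1"
  using s0_sq by (simp add: z0_def cmod_def)

lemma norm_z1: "norm (z1 a) = 1"
  using s0_sq by (simp add: z1_def cmod_def)

lemma z0_ne_z1: "z0 a \<noteq> z1 a"
  using s0_pos by (auto simp: z0_def z1_def complex_eq_iff)

lemma z_sum: "z0 a + z1 a = a - cnj a"
  by (simp add: z0_def z1_def complex_eq_iff)

lemma z_prod: "z0 a * z1 a = -1"
  using s0_sq by (simp add: z0_def z1_def complex_eq_iff power2_eq_square algebra_simps)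

lemma root_z0: "1 + (a - cnj a) * z0 a - (z0 a) ^ 2 = 0"
proof -
  have "(z0 a)^2 = z0 a * (z0 a + z1 a) - z0 a * z1 a" by (simp add: algebra_simps power2_eq_square)
  then show ?thesis unfolding z_sum z_prod by (simp add: algebra_simps)
qed

lemma root_z1: "1 + (a - cnj a) * z1 a - (z1 a) ^ 2 = 0"
proof -
  have "(z1 a)^2 = z1 a * (z0 a + z1 a) - z0 a * z1 a" by (simp add: algebra_simps power2_eq_square)
  then show ?thesis unfolding z_sum z_prod by (simp add: algebra_simps)
qed

lemma Re_z0: "Re a \<noteq> 0 \<Longrightarrow> Re (complex_of_real (Re a) * z0 a) * 1 > 0"
  using s0_pos by (auto simp: z0_def mult_neg_pos)

lemma Re_z1: "Re a \<noteq> 0 \<Longrightarrow> Re (complex_of_real (Re a) * z1 a) * (-1) > 0"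
  using s0_pos by (auto simp: z1_def mult_pos_neg mult_neg_pos)

lemma ev_Sq_z0: "ev (Sq a) (z0 a) = 2 * of_real (Re a) * z0 a"
  using ev_Sq_root[of a "z0 a" 1] a1 norm_z0 root_z0 Re_z0 by simp

lemma ev_Sq_z1: "ev (Sq a) (z1 a) = - (2 * of_real (Re a) * z1 a)"
  using ev_Sq_root[of a "z1 a" "-1"] a1 norm_z1 root_z1 Re_z1 by simp

lemma ev_Ff_z0: assumes "a \<noteq> 0" shows "ev (Ff a) (z0 a) = 1"
proof -
  have z0nz: "z0 a \<noteq> 0" using norm_z0 by auto
  have "ev (Ff a) (z0 a) = (ev (Sq a) (z0 a) - 1 + (z0 a) ^ 2) / (2 * a * z0 a)"
    by (rule ev_Ff) (use a1 assms norm_z0 z0nz in auto)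
  also have "ev (Sq a) (z0 a) - 1 + (z0 a) ^ 2 = (a + cnj a) * z0 a + (a - cnj a) * z0 a"
    unfolding ev_Sq_z0 using root_z0 by (simp add: complex_add_cnj algebra_simps)
  also have "\<dots> = 2 * a * z0 a" by (simp add: algebra_simps)
  finally show ?thesis using z0nz assms by simp
qed

lemma ev_Ff_z1: assumes "a \<noteq> 0" shows "ev (Ff a) (z1 a) = - cnj a / a"
proof -
  have z1nz: "z1 a \<noteq> 0" using norm_z1 by auto
  have "ev (Ff a) (z1 a) = (ev (Sq a) (z1 a) - 1 + (z1 a) ^ 2) / (2 * a * z1 a)"
    by (rule ev_Ff) (use a1 assms norm_z1 z1nz in auto)
  also have "ev (Sq a) (z1 a) - 1 + (z1 a) ^ 2 = - (a + cnj a) * z1 a + (a - cnj a) * z1 a"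
    unfolding ev_Sq_z1 using root_z1 by (simp add: complex_add_cnj algebra_simps)
  also have "\<dots> = - 2 * cnj a * z1 a" by (simp add: algebra_simps)
  finally show ?thesis using z1nz assms by (simp add: field_simps)
qed

end


lemma ring_Fk:
  fixes X F G C A B :: "'a::comm_ring_1"
  assumes quad: "A * X * F^2 + (1 - X^2) * F - B * X = 0"
    and XG: "C * X * G = F - B * X"
    and cc: "C * C + A * B = 1"
  shows "C * X * (G - F * (X * (C - A * G))) = 0"
proof -
  have "C * X * (G - F * (X * (C - A * G))) = (F - B * X) - X * F * (C * C * X - A * (C * X * G))"
    by (simp add: algebra_simps XG[symmetric] power2_eq_square)
  also have "\<dots> = (F - B * X) - X * F * ((C * C + A * B) * X - A * F)"
    unfolding XG by (simp add: algebra_simps)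
  also have "\<dots> = A * X * F^2 + (1 - X^2) * F - B * X"
    unfolding cc by (simp add: algebra_simps power2_eq_square)
  also have "\<dots> = 0" unfolding quad by simp
  finally show ?thesis .
qed

lemma ring_d:
  fixes X F G C A B R L R' L' :: "'a::comm_ring_1"
  assumes R': "R' = X * (C * R - A * L)"
    and L: "L = X * (B * R' + C * L')"
    and XG: "C * X * G = F - B * X"
    and Fk: "F * (X * (C - A * G)) = G"
  shows "(1 + A * X * F) * (L - G * R) = X * C * (L' - G * R')"
proof -
  have "L - G * R = F * R' + X * C * (L' - G * R') - G * R"
  proof -
    have "L = (B * X + C * X * G) * R' + X * C * (L' - G * R')"
      unfolding L by (simp add: algebra_simps)
    also have "B * X + C * X * G = F" unfolding XG by simp
    finally show ?thesis by simp
  qed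
  also have "F * R' = G * R - A * X * F * (L - G * R)"
  proof -
    have "F * R' = F * (X * (C - A * G)) * R - A * X * F * (L - G * R)"
      unfolding R' by (simp add: algebra_simps)
    then show ?thesis unfolding Fk .
  qed
  finally have "L - G * R = - (A * X * F) * (L - G * R) + X * C * (L' - G * R')"
    by (simp add: algebra_simps)
  then show ?thesis by (simp add: algebra_simps)
qed

lemma ring_AD:
  fixes X F C A B AA BB R1 al be :: "'a::comm_ring_1"
  assumes eA: "AA = al + X * (B * AA + C * BB)"
    and eB: "BB = be + F * R1"
    and eR: "R1 = X * (C * AA - A * BB)"
    and cc: "C * C + A * B = 1"
  shows "AA * (1 - B * X + X * (A - X) * F) = al * (1 + A * X * F) + C * X * be"
    and "BB * (1 - B * X + X * (A - X) * F) = be * (1 - B * X) + C * X * F * al"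
proof -
  have D: "1 - B * X + X * (A - X) * F = (1 - B * X) * (1 + A * X * F) - C * C * X^2 * F"
  proof -
    have "1 - B * X + X * (A - X) * F = 1 - B * X + A * X * F - (C * C + A * B) * X^2 * F"
      unfolding cc by (simp add: algebra_simps power2_eq_square)
    then show ?thesis by (simp add: algebra_simps power2_eq_square)
  qed
  have a1: "AA * (1 - B * X) = al + C * X * BB" using eA by (simp add: algebra_simps)
  have b1: "BB * (1 + A * X * F) = be + C * X * F * AA" using eB eR by (simp add: algebra_simps)
  show "AA * (1 - B * X + X * (A - X) * F) = al * (1 + A * X * F) + C * X * be"
  proof -
    have "AA * (1 - B * X + X * (A - X) * F) = (AA * (1 - B * X)) * (1 + A * X * F) - C * C * X^2 * F * AA"
      unfolding D by (simp add: algebra_simps)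
    also have "\<dots> = al * (1 + A * X * F) + C * X * (BB * (1 + A * X * F) - C * X * F * AA)"
      unfolding a1 by (simp add: algebra_simps power2_eq_square)
    also have "\<dots> = al * (1 + A * X * F) + C * X * be" unfolding b1 by simp
    finally show ?thesis .
  qed
  show "BB * (1 - B * X + X * (A - X) * F) = be * (1 - B * X) + C * X * F * al"
  proof -
    have "BB * (1 - B * X + X * (A - X) * F) = (BB * (1 + A * X * F)) * (1 - B * X) - C * C * X^2 * F * BB"
      unfolding D by (simp add: algebra_simps)
    also have "\<dots> = be * (1 - B * X) + C * X * F * (AA * (1 - B * X) - C * X * BB)"
      unfolding b1 by (simp add: algebra_simps power2_eq_square)
    also have "\<dots> = be * (1 - B * X) + C * X * F * al" unfolding a1 by simp
    finally show ?thesis .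
  qed
qed

lemma ring_DW:
  fixes X F C A B :: "'a::comm_ring_1"
  assumes quad: "A * X * F^2 + (1 - X^2) * F - B * X = 0"
    and cc: "C * C + A * B = 1"
  shows "(1 - B * X + X * (A - X) * F) * (C * C + A * X - X^2 - A * (A - X) * F)
         = C * C * (1 + (A - B) * X - X^2)"
proof -
  have "(1 - B * X + X * (A - X) * F) * (C * C + A * X - X^2 - A * (A - X) * F)
      - C * C * (1 + (A - B) * X - X^2)
      = - ((A - X)^2 * (A * X * F^2 + (1 - X^2) * F - B * X)) + (C * C + A * B - 1) * ((A - X) * X * (F - 1))"
    by (simp add: algebra_simps power2_eq_square)
  also have "\<dots> = 0" unfolding quad cc by simp
  finally show ?thesis by simp
qed


definition sstep :: "complex \<Rightarrow> complex \<Rightarrow> (nat \<Rightarrow> bool \<Rightarrow> complex) \<Rightarrow> (nat \<Rightarrow> bool \<Rightarrow> complex)" where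
  "sstep a c psi = (\<lambda>x b.
     if b then (if x = 0 then cnj a * psi 0 True + c * psi 0 False
                else c * psi (x - 1) True - a * psi (x - 1) False)
     else cnj a * psi (x + 1) True + c * psi (x + 1) False)"

definition amp :: "complex \<Rightarrow> complex \<Rightarrow> complex \<Rightarrow> complex \<Rightarrow> nat \<Rightarrow> nat \<Rightarrow> bool \<Rightarrow> complex" where
  "amp a c al be t = (sstep a c ^^ t) (typeI_init al be)"

definition Rf where "Rf a c al be x = Abs_fps (\<lambda>t. amp a c al be t x True)"
definition Lf where "Lf a c al be x = Abs_fps (\<lambda>t. amp a c al be t x False)"

lemma amp_0: "amp a c al be 0 = typeI_init al be" by (simp add: amp_def)
lemma amp_Suc: "amp a c al be (Suc t) = sstep a c (amp a c al be t)" by (simp add: amp_def)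

lemma Rf_0_eq:
  "Rf a c al be 0 = fps_const al + fps_X * (fps_const (cnj a) * Rf a c al be 0 + fps_const c * Lf a c al be 0)"
proof (rule fps_ext)
  fix n show "Rf a c al be 0 $ n = (fps_const al + fps_X * (fps_const (cnj a) * Rf a c al be 0 + fps_const c * Lf a c al be 0)) $ n"
    by (cases n) (simp_all add: Rf_def Lf_def amp_0 amp_Suc typeI_init_def sstep_def)
qed

lemma Rf_Suc_eq:
  "Rf a c al be (Suc x) = fps_X * (fps_const c * Rf a c al be x - fps_const a * Lf a c al be x)"
proof (rule fps_ext)
  fix n show "Rf a c al be (Suc x) $ n = (fps_X * (fps_const c * Rf a c al be x - fps_const a * Lf a c al be x)) $ n"
    by (cases n) (simp_all add: Rf_def Lf_def amp_0 amp_Suc typeI_init_def sstep_def)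
qed

lemma Lf_eq:
  "Lf a c al be x = (if x = 0 then fps_const be else 0)
     + fps_X * (fps_const (cnj a) * Rf a c al be (Suc x) + fps_const c * Lf a c al be (Suc x))"
proof (rule fps_ext)
  fix n show "Lf a c al be x $ n = ((if x = 0 then fps_const be else 0)
     + fps_X * (fps_const (cnj a) * Rf a c al be (Suc x) + fps_const c * Lf a c al be (Suc x))) $ n"
    by (cases n) (simp_all add: Rf_def Lf_def amp_0 amp_Suc typeI_init_def sstep_def)
qed

lemma vanish:
  fixes d :: "nat \<Rightarrow> complex fps"
  assumes rec: "\<And>x. x \<ge> 1 \<Longrightarrow> d x + fps_X * (H * d x) = fps_X * (fps_const k * d (Suc x))"
  shows "x \<ge> 1 \<Longrightarrow> d x = 0"
proof -
  have main: "\<forall>x\<ge>1. d x $ n = 0" for n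
  proof (induction n rule: less_induct)
    case (less n)
    show ?case
    proof (intro allI impI)
      fix x :: nat assume x: "x \<ge> 1"
      have e: "d x $ n = (fps_X * (fps_const k * d (Suc x))) $ n - (fps_X * (H * d x)) $ n"
        using arg_cong[OF rec[OF x], of "\<lambda>f. f $ n"] by (simp add: algebra_simps)
      show "d x $ n = 0"
      proof (cases n)
        case 0 then show ?thesis using e by simp
      next
        case (Suc m)
        have "(H * d x) $ m = (\<Sum>i = 0..m. H $ i * d x $ (m - i))" by (rule fps_mult_nth)
        also have "\<dots> = 0"
          using less.IH[of "m - _"] x Suc by (intro sum.neutral) auto
        finally have 1: "(H * d x) $ m = 0" .
        have 2: "d (Suc x) $ m = 0" using less.IH[of m] Suc x by simp
        show ?thesis using e 1 2 Suc by simp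
      qed
    qed
  qed
  show "x \<ge> 1 \<Longrightarrow> d x = 0" using main by (auto intro: fps_ext)
qed


definition Gf :: "complex \<Rightarrow> complex \<Rightarrow> complex fps \<Rightarrow> complex fps" where
  "Gf a c F = fps_const (1 / c) * (fps_shift 1 F - fps_const (cnj a))"
definition kap :: "complex \<Rightarrow> complex \<Rightarrow> complex fps \<Rightarrow> complex fps" where
  "kap a c F = fps_X * (fps_const c - fps_const a * Gf a c F)"
definition Dd :: "complex \<Rightarrow> complex fps \<Rightarrow> complex fps" where
  "Dd a F = 1 - fps_const (cnj a) * fps_X + fps_X * (fps_const a - fps_X) * F"
definition Ww :: "complex \<Rightarrow> complex \<Rightarrow> complex fps \<Rightarrow> complex fps" where
  "Ww a c F = fps_const c * fps_const c + fps_const a * fps_X - fps_X ^ 2 - fps_const a * (fps_const a - fps_X) * F"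
definition Ee :: "complex \<Rightarrow> complex fps" where
  "Ee a = 1 + (fps_const a - fps_const (cnj a)) * fps_X - fps_X ^ 2"
definition nA :: "complex \<Rightarrow> complex \<Rightarrow> complex \<Rightarrow> complex \<Rightarrow> complex fps \<Rightarrow> complex fps" where
  "nA a c al be F = fps_const al * (1 + fps_const a * fps_X * F) + fps_const c * fps_X * fps_const be"
definition nB :: "complex \<Rightarrow> complex \<Rightarrow> complex \<Rightarrow> complex \<Rightarrow> complex fps \<Rightarrow> complex fps" where
  "nB a c al be F = fps_const be * (1 - fps_const (cnj a) * fps_X) + fps_const c * fps_X * F * fps_const al"
definition hR :: "complex \<Rightarrow> complex \<Rightarrow> complex \<Rightarrow> complex \<Rightarrow> complex fps \<Rightarrow> nat \<Rightarrow> complex fps" where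
  "hR a c al be F x = (if x = 0 then nA a c al be F * Ww a c F
     else kap a c F ^ (x - 1) * (fps_X * (fps_const c * nA a c al be F - fps_const a * nB a c al be F)) * Ww a c F)"
definition hL :: "complex \<Rightarrow> complex \<Rightarrow> complex \<Rightarrow> complex \<Rightarrow> complex fps \<Rightarrow> nat \<Rightarrow> complex fps" where
  "hL a c al be F x = (if x = 0 then nB a c al be F * Ww a c F else Gf a c F * hR a c al be F x)"

context
  fixes a c al be :: complex and F :: "complex fps"
  assumes quad: "fps_const a * fps_X * F ^ 2 + (1 - fps_X ^ 2) * F - fps_const (cnj a) * fps_X = 0"
    and cc: "c * c + a * cnj a = 1" and cnz: "c \<noteq> 0"
begin

abbreviation "RR \<equiv> Rf a c al be"
abbreviation "LL \<equiv> Lf a c al be"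

lemma ccf: "fps_const c * fps_const c + fps_const a * fps_const (cnj a) = (1 :: complex fps)"
  using cc by (simp only: fps_const_mult fps_const_add) simp

lemma F0: "F $ 0 = 0"
proof -
  have "(fps_const a * fps_X * F ^ 2 + (1 - fps_X ^ 2) * F - fps_const (cnj a) * fps_X) $ 0 = 0"
    using quad by simp
  then show ?thesis by simp
qed

lemma XG: "fps_const c * fps_X * Gf a c F = F - fps_const (cnj a) * fps_X"
proof -
  have "fps_const c * fps_X * Gf a c F = (fps_const c * fps_const (1 / c)) * (fps_X * fps_shift 1 F - fps_X * fps_const (cnj a))"
    unfolding Gf_def by (simp only: mult_ac right_diff_distrib)
  also have "fps_const c * fps_const (1 / c) = (1 :: complex fps)" using cnz by (simp only: fps_const_mult) simp
  also have "fps_X * fps_shift 1 F = F" by (rule X_shift[OF F0])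
  finally show ?thesis by (simp add: mult_ac)
qed

lemma Fk: "F * kap a c F = Gf a c F"
proof -
  have "fps_const c * fps_X * (Gf a c F - F * (fps_X * (fps_const c - fps_const a * Gf a c F))) = 0"
    by (rule ring_Fk[OF quad XG ccf])
  moreover have "fps_const c * fps_X \<noteq> (0 :: complex fps)" using cnz by simp
  ultimately show ?thesis unfolding kap_def by simp
qed

lemma d_rec:
  assumes "x \<ge> 1"
  shows "(LL x - Gf a c F * RR x) + fps_X * ((fps_const a * F) * (LL x - Gf a c F * RR x))
       = fps_X * (fps_const c * (LL (Suc x) - Gf a c F * RR (Suc x)))"
proof -
  have L: "LL x = fps_X * (fps_const (cnj a) * RR (Suc x) + fps_const c * LL (Suc x))"
    using Lf_eq[of a c al be x] assms by simp
  have "(1 + fps_const a * fps_X * F) * (LL x - Gf a c F * RR x)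
      = fps_X * fps_const c * (LL (Suc x) - Gf a c F * RR (Suc x))"
    by (rule ring_d[OF Rf_Suc_eq L XG]) (use Fk in \<open>simp add: kap_def\<close>)
  then show ?thesis by (simp add: algebra_simps)
qed

lemma L_eq_GR: "x \<ge> 1 \<Longrightarrow> LL x = Gf a c F * RR x"
  using vanish[of "\<lambda>x. LL x - Gf a c F * RR x" "fps_const a * F" c x] d_rec by simp

lemma R_Suc_kap: "x \<ge> 1 \<Longrightarrow> RR (Suc x) = kap a c F * RR x"
  unfolding Rf_Suc_eq[of a c al be x] L_eq_GR kap_def by (simp add: algebra_simps)

lemma R_pow: "x \<ge> 1 \<Longrightarrow> RR x = kap a c F ^ (x - 1) * RR 1"
proof (induction x)
  case 0 then show ?case by simp
next
  case (Suc y)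
  show ?case
  proof (cases "y = 0")
    case True then show ?thesis by simp
  next
    case False
    then have "RR (Suc y) = kap a c F * RR y" using R_Suc_kap by simp
    also have "RR y = kap a c F ^ (y - 1) * RR 1" using Suc.IH False by simp
    finally show ?thesis using False by (cases y) (simp_all add: mult_ac)
  qed
qed

lemma B_eq: "LL 0 = fps_const be + F * RR 1"
proof -
  have "LL 0 = fps_const be + fps_X * (fps_const (cnj a) * RR 1 + fps_const c * LL 1)"
    using Lf_eq[of a c al be 0] by simp
  also have "LL 1 = Gf a c F * RR 1" by (rule L_eq_GR) simp
  also have "fps_X * (fps_const (cnj a) * RR 1 + fps_const c * (Gf a c F * RR 1))
      = (fps_const (cnj a) * fps_X + fps_const c * fps_X * Gf a c F) * RR 1"
    by (simp add: algebra_simps)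
  also have "fps_const (cnj a) * fps_X + fps_const c * fps_X * Gf a c F = F" unfolding XG by simp
  finally show ?thesis .
qed

lemma AD: "RR 0 * Dd a F = nA a c al be F"
  and BD: "LL 0 * Dd a F = nB a c al be F"
proof -
  have eA: "RR 0 = fps_const al + fps_X * (fps_const (cnj a) * RR 0 + fps_const c * LL 0)"
    by (rule Rf_0_eq)
  have eR: "RR 1 = fps_X * (fps_const c * RR 0 - fps_const a * LL 0)"
    using Rf_Suc_eq[of a c al be 0] by simp
  note r = ring_AD[OF eA B_eq eR ccf]
  show "RR 0 * Dd a F = nA a c al be F" using r(1) by (simp add: Dd_def nA_def mult_ac)
  show "LL 0 * Dd a F = nB a c al be F" using r(2) by (simp add: Dd_def nB_def mult_ac)
qed

lemma DW: "Dd a F * Ww a c F = fps_const c * fps_const c * Ee a"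
  unfolding Dd_def Ww_def Ee_def by (rule ring_DW[OF quad ccf])

lemma EA: "fps_const c * fps_const c * Ee a * RR 0 = nA a c al be F * Ww a c F"
proof -
  have "nA a c al be F * Ww a c F = RR 0 * (Dd a F * Ww a c F)" by (simp add: AD[symmetric] mult_ac)
  then show ?thesis unfolding DW by (simp add: mult_ac)
qed

lemma EB: "fps_const c * fps_const c * Ee a * LL 0 = nB a c al be F * Ww a c F"
proof -
  have "nB a c al be F * Ww a c F = LL 0 * (Dd a F * Ww a c F)" by (simp add: BD[symmetric] mult_ac)
  then show ?thesis unfolding DW by (simp add: mult_ac)
qed

lemma ER1: "fps_const c * fps_const c * Ee a * RR 1
   = fps_X * (fps_const c * nA a c al be F - fps_const a * nB a c al be F) * Ww a c F"
proof -
  have eR: "RR 1 = fps_X * (fps_const c * RR 0 - fps_const a * LL 0)"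
    using Rf_Suc_eq[of a c al be 0] by simp
  have "fps_const c * fps_const c * Ee a * RR 1
     = fps_X * (fps_const c * (fps_const c * fps_const c * Ee a * RR 0) - fps_const a * (fps_const c * fps_const c * Ee a * LL 0))"
    unfolding eR by (simp add: algebra_simps)
  also have "\<dots> = fps_X * (fps_const c * nA a c al be F - fps_const a * nB a c al be F) * Ww a c F"
    unfolding EA EB by (simp add: algebra_simps)
  finally show ?thesis .
qed

lemma ER: "fps_const c * fps_const c * Ee a * RR x = hR a c al be F x"
proof (cases "x = 0")
  case True then show ?thesis using EA by (simp add: hR_def)
next
  case False
  then have "RR x = kap a c F ^ (x - 1) * RR 1" by (intro R_pow) simp
  then have "fps_const c * fps_const c * Ee a * RR x = kap a c F ^ (x - 1) * (fps_const c * fps_const c * Ee a * RR 1)"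
    by (simp only: mult_ac)
  also have "\<dots> = kap a c F ^ (x - 1) * (fps_X * (fps_const c * nA a c al be F - fps_const a * nB a c al be F) * Ww a c F)"
    unfolding ER1 ..
  also have "\<dots> = hR a c al be F x" unfolding hR_def using False by (simp only: if_False mult.assoc)
  finally show ?thesis .
qed

lemma EL: "fps_const c * fps_const c * Ee a * LL x = hL a c al be F x"
proof (cases "x = 0")
  case True then show ?thesis using EB by (simp add: hL_def)
next
  case False
  then have "LL x = Gf a c F * RR x" by (intro L_eq_GR) simp
  then have "fps_const c * fps_const c * Ee a * LL x = Gf a c F * (fps_const c * fps_const c * Ee a * RR x)"
    by (simp add: mult_ac)
  then show ?thesis unfolding ER hL_def using False by simp
qed

end


definition cr :: "complex \<Rightarrow> real" where "cr a = sqrt (1 - (cmod a)^2)"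
definition FF :: "complex \<Rightarrow> complex fps" where "FF a = (if a = 0 then 0 else Ff a)"

lemma ring_exp2:
  fixes A B X :: "'a::comm_ring_1"
  shows "(1 - A * X) * (1 - B * X) = 1 - (A + B) * X + (A * B) * X ^ 2"
  by (simp add: algebra_simps power2_eq_square)

lemma ring_E:
  fixes A B X :: "'a::comm_ring_1"
  shows "1 - (B - A) * X + (- 1) * X ^ 2 = 1 + (A - B) * X - X ^ 2"
  by (simp add: algebra_simps)

context
  fixes a :: complex
  assumes a1: "cmod a < 1"
begin

abbreviation "c \<equiv> complex_of_real (cr a)"

lemma cr_pos: "cr a > 0"
  using a1 by (simp add: cr_def power_less_one_iff abs_less_iff)

lemma cr_sq: "(cr a)^2 = 1 - (cmod a)^2"
  using a1 by (simp add: cr_def power_le_one abs_le_iff)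

lemma cc: "c * c + a * cnj a = 1"
proof -
  have "c * c = complex_of_real ((cr a)^2)" by (simp add: power2_eq_square)
  also have "\<dots> = 1 - complex_of_real ((cmod a)^2)" by (simp add: cr_sq)
  also have "complex_of_real ((cmod a)^2) = a * cnj a" by (rule complex_norm_square)
  finally show ?thesis by simp
qed

lemma cnz: "c \<noteq> 0" using cr_pos by simp

lemma quadFF: "fps_const a * fps_X * FF a ^ 2 + (1 - fps_X ^ 2) * FF a - fps_const (cnj a) * fps_X = 0"
proof (cases "a = 0")
  case True then show ?thesis by (simp add: FF_def)
next
  case False then show ?thesis using Ff_quad[of a] a1 by (simp add: FF_def)
qed

lemma l1FF: "l1 (FF a)"
  using l1_Ff[of a] a1 by (simp add: FF_def)

lemma l1_Gf: "l1 (Gf a c (FF a))"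
  unfolding Gf_def by (simp add: l1_shift l1FF)

lemma l1_kap: "l1 (kap a c (FF a))"
  unfolding kap_def by (simp add: l1_Gf)

lemma l1_Ww: "l1 (Ww a c (FF a))"
  unfolding Ww_def by (simp add: l1FF)

lemma l1_nA: "l1 (nA a c al be (FF a))"
  unfolding nA_def by (simp add: l1FF)

lemma l1_nB: "l1 (nB a c al be (FF a))"
  unfolding nB_def by (simp add: l1FF)

definition PR :: "complex \<Rightarrow> complex \<Rightarrow> nat \<Rightarrow> complex fps" where
  "PR al be x = (if x = 0 then nA a c al be (FF a)
     else kap a c (FF a) ^ (x - 1) * (fps_X * (fps_const c * nA a c al be (FF a) - fps_const a * nB a c al be (FF a))))"
definition PL :: "complex \<Rightarrow> complex \<Rightarrow> nat \<Rightarrow> complex fps" where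
  "PL al be x = (if x = 0 then nB a c al be (FF a) else Gf a c (FF a) * PR al be x)"

lemma hR_eq: "hR a c al be (FF a) x = PR al be x * Ww a c (FF a)"
  by (simp add: hR_def PR_def)

lemma hL_eq: "hL a c al be (FF a) x = PL al be x * Ww a c (FF a)"
  by (simp add: hL_def PL_def hR_eq mult.assoc)

lemma l1_PR: "l1 (PR al be x)"
  unfolding PR_def by (simp add: l1_kap l1_nA l1_nB)

lemma l1_PL: "l1 (PL al be x)"
  unfolding PL_def by (simp add: l1_PR l1_Gf l1_nB)

lemma ev_Ww: "norm z \<le> 1 \<Longrightarrow> ev (Ww a c (FF a)) z = c * c + a * z - z ^ 2 - a * (a - z) * ev (FF a) z"
  unfolding Ww_def by (simp add: ev_add ev_diff ev_mult ev_power l1FF)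

lemma W_z1: "ev (Ww a c (FF a)) (z1 a) = 0"
proof (cases "a = 0")
  case True
  have "cr a = 1" using True by (simp add: cr_def)
  moreover have "z1 a = -1" using True by (simp add: z1_def s0_def complex_eq_iff)
  moreover have "ev (Ww a c (FF a)) (z1 a) = c * c + a * z1 a - (z1 a) ^ 2 - a * (a - z1 a) * ev (FF a) (z1 a)"
    by (rule ev_Ww) (simp add: norm_z1[OF a1])
  ultimately show ?thesis using True by (simp add: FF_def)
next
  case False
  have "ev (Ww a c (FF a)) (z1 a) = c * c + a * z1 a - (z1 a) ^ 2 - a * (a - z1 a) * (- cnj a / a)"
    using ev_Ww[of "z1 a"] norm_z1[OF a1] ev_Ff_z1[OF a1 False] False by (simp add: FF_def)
  also have "\<dots> = (c * c + a * cnj a) + (a - cnj a) * z1 a - (z1 a) ^ 2"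
    using False by (simp add: field_simps)
  also have "\<dots> = 0" using root_z1[OF a1] unfolding cc by simp
  finally show ?thesis .
qed

lemma W_z0: "ev (Ww a c (FF a)) (z0 a) = 2 * of_real (Re a) * (z0 a - a)"
proof (cases "a = 0")
  case True
  have "cr a = 1" using True by (simp add: cr_def)
  moreover have "z0 a = 1" using True by (simp add: z0_def s0_def complex_eq_iff)
  moreover have "ev (Ww a c (FF a)) (z0 a) = c * c + a * z0 a - (z0 a) ^ 2 - a * (a - z0 a) * ev (FF a) (z0 a)"
    by (rule ev_Ww) (simp add: norm_z0[OF a1])
  ultimately show ?thesis using True by (simp add: FF_def)
next
  case False
  have "ev (Ww a c (FF a)) (z0 a) = c * c + a * z0 a - (z0 a) ^ 2 - a * (a - z0 a) * 1"
    using ev_Ww[of "z0 a"] norm_z0[OF a1] ev_Ff_z0[OF a1 False] False by (simp add: FF_def)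
  also have "(z0 a) ^ 2 = 1 + (a - cnj a) * z0 a" using root_z0[OF a1] by (simp add: algebra_simps)
  also have "c * c + a * z0 a - (1 + (a - cnj a) * z0 a) - a * (a - z0 a) * 1
      = (c * c + a * cnj a - 1) + (a + cnj a) * (z0 a - a)"
    by (simp add: algebra_simps)
  also have "a + cnj a = 2 * of_real (Re a)" by (simp add: complex_add_cnj)
  finally show ?thesis unfolding cc by simp
qed

lemma Ee_factor: "Ee a = (1 - fps_const (cnj (z0 a)) * fps_X) * (1 - fps_const (cnj (z1 a)) * fps_X)"
proof -
  have s: "cnj (z0 a) + cnj (z1 a) = cnj a - a"
  proof -
    have "cnj (z0 a + z1 a) = cnj (a - cnj a)" using z_sum[OF a1] by simp
    then show ?thesis by simp
  qed
  have p: "cnj (z0 a) * cnj (z1 a) = -1"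
  proof -
    have "cnj (z0 a * z1 a) = cnj (-1)" using z_prod[OF a1] by simp
    then show ?thesis by simp
  qed
  have s': "fps_const (cnj (z0 a)) + fps_const (cnj (z1 a)) = fps_const (cnj a) - fps_const a"
    using s by (simp only: fps_const_add fps_const_sub)
  have p': "fps_const (cnj (z0 a)) * fps_const (cnj (z1 a)) = - 1"
    using p by (simp only: fps_const_mult) simp
  have "(1 - fps_const (cnj (z0 a)) * fps_X) * (1 - fps_const (cnj (z1 a)) * fps_X)
     = 1 - (fps_const (cnj (z0 a)) + fps_const (cnj (z1 a))) * fps_X
       + (fps_const (cnj (z0 a)) * fps_const (cnj (z1 a))) * fps_X ^ 2"
    by (rule ring_exp2)
  also have "\<dots> = Ee a" unfolding s' p' Ee_def by (rule ring_E)
  finally show ?thesis by simp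
qed

lemma ccnz: "c * c \<noteq> 0" using cnz by simp

definition KR :: "complex \<Rightarrow> complex \<Rightarrow> nat \<Rightarrow> complex" where
  "KR al be x = cnj (z0 a) * ev (hR a c al be (FF a) x) (z0 a) / (c * c * (cnj (z0 a) - cnj (z1 a)))"
definition KL :: "complex \<Rightarrow> complex \<Rightarrow> nat \<Rightarrow> complex" where
  "KL al be x = cnj (z0 a) * ev (hL a c al be (FF a) x) (z0 a) / (c * c * (cnj (z0 a) - cnj (z1 a)))"

lemma limit_general:
  "(\<lambda>t. (cmod (amp a c al be t x True))\<^sup>2 + (cmod (amp a c al be t x False))\<^sup>2)
     \<longlonglongrightarrow> (cmod (KR al be x))\<^sup>2 + (cmod (KL al be x))\<^sup>2"
proof -
  note ctx = quadFF cc cnz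
  have nz0: "norm (cnj (z0 a)) = 1" using norm_z0[OF a1] by simp
  have eR: "fps_const (c * c) * ((1 - fps_const (cnj (z0 a)) * fps_X) * (1 - fps_const (cnj (z1 a)) * fps_X)) * Rf a c al be x
      = hR a c al be (FF a) x"
    using ER[OF ctx, of al be x] unfolding Ee_factor by (simp only: fps_const_mult[symmetric])
  have eL: "fps_const (c * c) * ((1 - fps_const (cnj (z0 a)) * fps_X) * (1 - fps_const (cnj (z1 a)) * fps_X)) * Lf a c al be x
      = hL a c al be (FF a) x"
    using EL[OF ctx, of al be x] unfolding Ee_factor by (simp only: fps_const_mult[symmetric])
  have l1R: "l1 (hR a c al be (FF a) x)" unfolding hR_eq by (simp add: l1_PR l1_Ww)
  have l1L: "l1 (hL a c al be (FF a) x)" unfolding hL_eq by (simp add: l1_PL l1_Ww)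
  have z1R: "ev (hR a c al be (FF a) x) (z1 a) = 0"
    unfolding hR_eq using ev_mult[OF l1_PR l1_Ww, of "z1 a" al be x] norm_z1[OF a1] W_z1 by simp
  have z1L: "ev (hL a c al be (FF a) x) (z1 a) = 0"
    unfolding hL_eq using ev_mult[OF l1_PL l1_Ww, of "z1 a" al be x] norm_z1[OF a1] W_z1 by simp
  have aR: "(\<lambda>t. Rf a c al be x $ t - KR al be x * cnj (z0 a) ^ t) \<longlonglongrightarrow> 0"
    unfolding KR_def by (rule asym[OF l1R norm_z0[OF a1] norm_z1[OF a1] z0_ne_z1[OF a1] ccnz eR z1R])
  have aL: "(\<lambda>t. Lf a c al be x $ t - KL al be x * cnj (z0 a) ^ t) \<longlonglongrightarrow> 0"
    unfolding KL_def by (rule asym[OF l1L norm_z0[OF a1] norm_z1[OF a1] z0_ne_z1[OF a1] ccnz eL z1L])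
  have "(\<lambda>t. (cmod (Rf a c al be x $ t))\<^sup>2) \<longlonglongrightarrow> (cmod (KR al be x))\<^sup>2"
    by (rule asym_norm[where A="\<lambda>t. Rf a c al be x $ t", OF aR nz0])
  moreover have "(\<lambda>t. (cmod (Lf a c al be x $ t))\<^sup>2) \<longlonglongrightarrow> (cmod (KL al be x))\<^sup>2"
    by (rule asym_norm[where A="\<lambda>t. Lf a c al be x $ t", OF aL nz0])
  ultimately show ?thesis by (simp add: Rf_def Lf_def tendsto_add)
qed

end


context
  fixes a al be :: complex
  assumes a1: "cmod a < 1" and p0: "Re a \<noteq> 0"
begin

abbreviation "cq \<equiv> complex_of_real (cr a)"
abbreviation "z \<equiv> z0 a"
abbreviation "F \<equiv> FF a"

lemma anz: "a \<noteq> 0" using p0 by auto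

lemma F_z: "ev F z = 1" using ev_Ff_z0[OF a1 anz] anz by (simp add: FF_def)

lemma nz: "norm z \<le> 1" using norm_z0[OF a1] by simp

lemma znz: "z \<noteq> 0" using norm_z0[OF a1] by auto

lemma root: "z ^ 2 = 1 + (a - cnj a) * z" using root_z0[OF a1] by (simp add: algebra_simps)

lemma cc': "cq * cq = 1 - a * cnj a" using cc[OF a1] by (simp add: algebra_simps)

definition "nuc = (z - a) / cq"

lemma G_z: "ev (Gf a cq F) z = nuc"
proof -
  have "ev (fps_const cq * fps_X * Gf a cq F) z = ev (F - fps_const (cnj a) * fps_X) z"
    by (rule arg_cong[OF XG[OF quadFF[OF a1] cc[OF a1] cnz[OF a1]]])
  then have "cq * z * ev (Gf a cq F) z = 1 - cnj a * z"
    using nz by (simp add: ev_mult ev_diff l1FF[OF a1] l1_Gf[OF a1] F_z)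
  moreover have "1 - cnj a * z = z * (z - a)" using root by (simp add: algebra_simps power2_eq_square)
  ultimately have "cq * z * ev (Gf a cq F) z = cq * z * nuc"
    using cnz[OF a1] by (simp add: nuc_def)
  then show ?thesis using cnz[OF a1] znz by simp
qed

lemma key1: "cq * z = nuc * (1 + a * z)"
proof -
  have "(z - a) * (1 + a * z) = z + a * z ^ 2 - a - a * a * z" by (simp add: algebra_simps power2_eq_square)
  also have "\<dots> = z * (1 - a * cnj a)" unfolding root by (simp add: algebra_simps)
  also have "\<dots> = cq * cq * z" by (simp add: cc')
  finally have "(z - a) * (1 + a * z) = cq * cq * z" .
  then show ?thesis using cnz[OF a1] by (simp add: nuc_def field_simps)
qed

lemma key2: "1 - cnj a * z = nuc * cq * z"
proof -
  have h: "1 - cnj a * z = z * (z - a)" using root by (simp add: algebra_simps power2_eq_square)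
  have g: "nuc * cq * z = z * (z - a)" using cnz[OF a1] by (simp add: nuc_def)
  show ?thesis unfolding g h ..
qed

lemma PR0: "PR a al be 0 = nA a cq al be F" unfolding PR_def[OF a1] by simp
lemma PRS: "x \<noteq> 0 \<Longrightarrow> PR a al be x = kap a cq F ^ (x - 1) * (fps_X * (fps_const cq * nA a cq al be F - fps_const a * nB a cq al be F))"
  unfolding PR_def[OF a1] by simp

lemma kap_z: "ev (kap a cq F) z = nuc"
proof -
  have "ev (kap a cq F) z = z * (cq - a * nuc)"
    unfolding kap_def using nz G_z by (simp add: ev_mult ev_diff l1_Gf[OF a1])
  also have "z * (cq - a * nuc) = nuc"
  proof -
    have "cq * (z * (cq - a * nuc)) = cq * nuc"
      using key1 by (simp add: algebra_simps)
    then show ?thesis using cnz[OF a1] by simp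
  qed
  finally show ?thesis .
qed

abbreviation "nA0 \<equiv> al * (1 + a * z) + cq * z * be"

lemma nA_z: "ev (nA a cq al be F) z = nA0"
  unfolding nA_def using nz by (simp add: ev_mult ev_add l1FF[OF a1] F_z)

lemma nB_z: "ev (nB a cq al be F) z = nuc * nA0"
proof -
  have "ev (nB a cq al be F) z = be * (1 - cnj a * z) + cq * z * al"
    unfolding nB_def using nz by (simp add: ev_mult ev_add ev_diff l1FF[OF a1] F_z)
  also have "\<dots> = nuc * nA0" unfolding key2 using key1 by (simp add: algebra_simps)
  finally show ?thesis .
qed

lemma PR_z: "ev (PR a al be x) z = nuc ^ x * nA0"
proof (cases "x = 0")
  case True then show ?thesis using PR0 nA_z by simp
next
  case False
  have "ev (PR a al be x) z = (ev (kap a cq F) z) ^ (x - 1) * (z * (cq * nA0 - a * (nuc * nA0)))"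
    unfolding PRS[OF False] using nz
    by (simp add: ev_mult ev_diff ev_power l1_kap[OF a1] l1_nA[OF a1] l1_nB[OF a1] nA_z nB_z)
  also have "z * (cq * nA0 - a * (nuc * nA0)) = (z * (cq - a * nuc)) * nA0" by (simp add: algebra_simps)
  also have "z * (cq - a * nuc) = nuc"
    using kap_z unfolding kap_def using nz G_z by (simp add: ev_mult ev_diff l1_Gf[OF a1])
  also have "ev (kap a cq F) z = nuc" by (rule kap_z)
  moreover have "nuc ^ (x - 1) * nuc = nuc ^ x" using False by (cases x) auto
  ultimately show ?thesis by (metis mult.assoc)
qed


lemma PL_z: "ev (PL a al be x) z = nuc ^ Suc x * nA0"
proof (cases "x = 0")
  case True
  have "PL a al be 0 = nB a cq al be F" unfolding PL_def[OF a1] by simp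
  then show ?thesis using True nB_z by simp
next
  case False
  have "PL a al be x = Gf a cq F * PR a al be x" unfolding PL_def[OF a1] using False by simp
  then have "ev (PL a al be x) z = ev (Gf a cq F) z * ev (PR a al be x) z"
    using ev_mult[OF l1_Gf[OF a1] l1_PR[OF a1] nz] by simp
  then show ?thesis unfolding G_z PR_z by (simp add: mult_ac)
qed

lemma Im_za: "Im (z - a) = 0" by (simp add: z0_def)

definition "nr = (Re z - Re a) / cr a"

lemma nuc_real: "nuc = complex_of_real nr"
proof -
  have "z - a = complex_of_real (Re z - Re a)" using Im_za by (simp add: complex_eq_iff)
  then show ?thesis by (simp add: nuc_def nr_def)
qed

lemma nr_nu: "nr = nu_I a"
proof -
  have "sqrt (1 - (cmod a)\<^sup>2) = cr a" by (simp add: cr_def)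
  moreover have "sqrt (1 - (Im a)\<^sup>2) = s0 a" by (simp add: s0_def)
  ultimately show ?thesis
    using p0 cr_pos[OF a1] by (cases "Re a > 0") (auto simp: nr_def nu_I_def z0_def field_simps)
qed

lemma norm_W0: "cmod (ev (Ww a cq F) z) = 2 * \<bar>Re a\<bar> * (\<bar>nr\<bar> * cr a)"
proof -
  have "ev (Ww a cq F) z = 2 * of_real (Re a) * (z - a)" by (rule W_z0[OF a1])
  also have "z - a = nuc * cq" using cnz[OF a1] by (simp add: nuc_def)
  finally show ?thesis using cr_pos[OF a1] by (simp add: norm_mult nuc_real)
qed

lemma prod_c2: "(1 + a * z) * (z - a) = cq * cq * z"
proof -
  have "(1 + a * z) * (z - a) = (1 + a * z) * (nuc * cq)" using cnz[OF a1] by (simp add: nuc_def)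
  also have "\<dots> = cq * (nuc * (1 + a * z))" by (simp add: mult_ac)
  also have "nuc * (1 + a * z) = cq * z" using key1 by simp
  finally show ?thesis by (simp add: mult_ac)
qed

lemma norm_prod: "cmod (1 + a * z) * (\<bar>nr\<bar> * cr a) = (cr a)^2"
proof -
  have "cmod ((1 + a * z) * (z - a)) = cmod (cq * cq * z)" unfolding prod_c2 ..
  moreover have "cmod (z - a) = \<bar>nr\<bar> * cr a"
  proof -
    have "z - a = nuc * cq" using cnz[OF a1] by (simp add: nuc_def)
    then show ?thesis using cr_pos[OF a1] by (simp add: norm_mult nuc_real)
  qed
  ultimately show ?thesis using norm_z0[OF a1] cr_pos[OF a1] by (simp add: norm_mult power2_eq_square)
qed

lemma nA0_eq: "nA0 = (1 + a * z) * (al + nuc * be)"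
  using key1 by (simp add: algebra_simps)

lemma norm_diff_z: "cmod (cnj z - cnj (z1 a)) = 2 * s0 a"
proof -
  have "cnj z - cnj (z1 a) = cnj (z - z1 a)" by simp
  moreover have "z - z1 a = complex_of_real (if Re a \<ge> 0 then 2 * s0 a else - 2 * s0 a)"
    by (simp add: z0_def z1_def complex_eq_iff)
  ultimately show ?thesis using s0_pos[OF a1] by (simp only: complex_mod_cnj) simp
qed

lemma norm_KR: "cmod (KR a al be x) = \<bar>nr\<bar> ^ x * cmod (al + nuc * be) * \<bar>Re a\<bar> / s0 a"
proof -
  have ev: "ev (hR a cq al be F x) z = nuc ^ x * nA0 * ev (Ww a cq F) z"
    unfolding hR_eq[OF a1] using ev_mult[OF l1_PR[OF a1] l1_Ww[OF a1] nz] PR_z by simp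
  have "cmod (KR a al be x) = cmod (nuc ^ x * nA0 * ev (Ww a cq F) z) / ((cr a)^2 * (2 * s0 a))"
    unfolding KR_def[OF a1] ev using norm_z0[OF a1] norm_diff_z
    by (simp add: norm_mult norm_divide power2_eq_square)
  also have "cmod (nuc ^ x * nA0 * ev (Ww a cq F) z)
      = \<bar>nr\<bar> ^ x * cmod (al + nuc * be) * (2 * \<bar>Re a\<bar>) * (cmod (1 + a * z) * (\<bar>nr\<bar> * cr a))"
    unfolding nA0_eq by (simp add: norm_mult norm_power nuc_real mult_ac norm_W0)
  also have "cmod (1 + a * z) * (\<bar>nr\<bar> * cr a) = (cr a)^2" by (rule norm_prod)
  finally show ?thesis using cr_pos[OF a1] s0_pos[OF a1] by (simp add: field_simps)
qed

lemma norm_KL: "cmod (KL a al be x) = \<bar>nr\<bar> * cmod (KR a al be x)"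
proof -
  have evL: "ev (hL a cq al be F x) z = nuc * (nuc ^ x * nA0 * ev (Ww a cq F) z)"
    unfolding hL_eq[OF a1] using ev_mult[OF l1_PL[OF a1] l1_Ww[OF a1] nz] PL_z by (simp add: mult_ac)
  have evR: "ev (hR a cq al be F x) z = nuc ^ x * nA0 * ev (Ww a cq F) z"
    unfolding hR_eq[OF a1] using ev_mult[OF l1_PR[OF a1] l1_Ww[OF a1] nz] PR_z by simp
  show ?thesis unfolding KL_def[OF a1] KR_def[OF a1] evL evR
    by (simp add: norm_mult norm_divide nuc_real)
qed

lemma sum_sq_KRL:
  "(cmod (KR a al be x))\<^sup>2 + (cmod (KL a al be x))\<^sup>2
   = (Re a)\<^sup>2 / (1 - (Im a)\<^sup>2) * (cmod (al + complex_of_real (nu_I a) * be))\<^sup>2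
     * (1 + (nu_I a)\<^sup>2) * nu_I a ^ (2 * x)"
proof -
  have s2: "(s0 a)^2 = 1 - (Im a)^2" by (rule s0_sq[OF a1])
  have e1: "(cmod (KR a al be x))\<^sup>2 + (cmod (KL a al be x))\<^sup>2 = (1 + nr^2) * (cmod (KR a al be x))\<^sup>2"
    unfolding norm_KL by (simp add: power_mult_distrib algebra_simps)
  have p: "(\<bar>nr\<bar> ^ x)^2 = nr ^ (2 * x)"
  proof -
    have "(\<bar>nr\<bar> ^ x)^2 = \<bar>nr\<bar> ^ (2 * x)" by (simp add: power_mult[symmetric] mult.commute)
    also have "\<dots> = nr ^ (2 * x)" by (rule power_even_abs) simp
    finally show ?thesis .
  qed
  have e2: "(cmod (KR a al be x))\<^sup>2 = nr ^ (2 * x) * (cmod (al + nuc * be))\<^sup>2 * (Re a)^2 / (1 - (Im a)^2)"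
    unfolding norm_KR s2[symmetric] p[symmetric] by (simp add: power_mult_distrib power_divide)
  show ?thesis unfolding e1 unfolding e2 nr_nu nuc_real by (simp add: mult_ac)
qed
end


lemma simp_limit:
  assumes a1: "cmod a < 1"
  shows "(\<lambda>t. (cmod (amp a (complex_of_real (cr a)) al be t x True))\<^sup>2
              + (cmod (amp a (complex_of_real (cr a)) al be t x False))\<^sup>2)
     \<longlonglongrightarrow> (Re a)\<^sup>2 / (1 - (Im a)\<^sup>2) * (cmod (al + complex_of_real (nu_I a) * be))\<^sup>2
          * (1 + (nu_I a)\<^sup>2) * nu_I a ^ (2 * x)"
proof (cases "Re a = 0")
  case False
  show ?thesis using limit_general[OF a1, of al be x] sum_sq_KRL[OF a1 False, of al be x] by simp
next
  case True
  have W0: "ev (Ww a (complex_of_real (cr a)) (FF a)) (z0 a) = 0" using W_z0[OF a1] True by simp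
  have nz: "norm (z0 a) \<le> 1" using norm_z0[OF a1] by simp
  have "ev (hR a (complex_of_real (cr a)) al be (FF a) x) (z0 a) = 0"
    unfolding hR_eq[OF a1] using ev_mult[OF l1_PR[OF a1] l1_Ww[OF a1] nz] W0 by simp
  then have R: "KR a al be x = 0" unfolding KR_def[OF a1] by simp
  have "ev (hL a (complex_of_real (cr a)) al be (FF a) x) (z0 a) = 0"
    unfolding hL_eq[OF a1] using ev_mult[OF l1_PL[OF a1] l1_Ww[OF a1] nz] W0 by simp
  then have L: "KL a al be x = 0" unfolding KL_def[OF a1] by simp
  show ?thesis using limit_general[OF a1, of al be x] True unfolding R L by simp
qed


lemma real_unit_aux:
  fixes A B C E :: real
  assumes "A^2 + B^2 = 1" "C^2 + E^2 = 1" "A * C = B * E" "A \<ge> 0" "B \<ge> 0" "C \<ge> 0" "E \<ge> 0"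
  shows "E = A" "C = B"
proof -
  have "(A * C)^2 = (B * E)^2" using assms(3) by simp
  then have "A^2 * C^2 = (1 - A^2) * (1 - C^2)" using assms(1,2)
    by (simp add: power_mult_distrib) (metis add_diff_cancel_left')
  then have c2: "C^2 = 1 - A^2" by (simp add: algebra_simps)
  then have "E^2 = A^2" using assms(2) by simp
  then show "E = A" using assms(4,7) by (simp add: power2_eq_iff_nonneg)
  have "C^2 = B^2" using c2 assms(1) by simp
  then show "C = B" using assms(5,6) by (simp add: power2_eq_iff_nonneg)
qed

lemma cnj_mult_self: "cnj w * w = complex_of_real ((cmod w)^2)"
  using complex_norm_square[of w] by (simp add: mult.commute)

lemma cRL_gen:
  fixes cLR cRL cLL cRR d m A :: complex and r :: real
  assumes "cRR = complex_of_real r * d * m" "cLL = complex_of_real r * d * cnj m" "A = cnj cLR * d"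
    "cnj cLL * cRL = - (cnj cLR * cRR)" "cnj d * d = 1" "cnj m * m = 1" "r \<noteq> 0"
  shows "cRL = - A * d"
proof -
  have cl: "cnj cLR = A * cnj d" using assms(3,5) by (simp add: mult_ac)
  have eq: "(complex_of_real r * cnj d * m) * cRL = (complex_of_real r * cnj d * m) * (- A * d)"
  proof -
    have "(complex_of_real r * cnj d * m) * cRL = cnj cLL * cRL" using assms(2) by (simp add: mult_ac)
    also have "\<dots> = - (cnj cLR * cRR)" by (rule assms(4))
    also have "\<dots> = - (A * cnj d * (complex_of_real r * d * m))" unfolding cl assms(1) ..
    also have "\<dots> = (complex_of_real r * cnj d * m) * (- A * d)" by (simp add: mult_ac)
    finally show ?thesis .
  qed
  moreover have nz0: "complex_of_real r * cnj d * m \<noteq> 0" using assms(5,6,7) by auto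
  show ?thesis by (rule mult_left_cancel[OF nz0, THEN iffD1, OF eq])
qed

lemma gauge_gen:
  fixes cRR cLR cRL cLL c d m A al be :: complex
  assumes e: "cRR = c * d * m" "cLL = c * d / m" "cLR = cnj A * d" "cRL = - A * d" and m: "m \<noteq> 0"
  shows "(typeI_step cRR cLR cRL cLL ^^ t) (typeI_init al be)
    = (\<lambda>x b. d ^ t * m ^ (if b then x else Suc x) * amp A c al (be / m) t x b)"
proof (induction t)
  case 0
  show ?case using m by (auto simp: amp_0 typeI_init_def fun_eq_iff)
next
  case (Suc t)
  show ?case
  proof (rule ext, rule ext)
    fix x b
    show "(typeI_step cRR cLR cRL cLL ^^ Suc t) (typeI_init al be) x b
        = d ^ Suc t * m ^ (if b then x else Suc x) * amp A c al (be / m) (Suc t) x b"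
      unfolding funpow.simps comp_def Suc.IH amp_Suc
      unfolding typeI_step_def sstep_def e
      using m by (cases b; cases x) (simp_all add: field_simps)
  qed
qed

context
  fixes cRR cLR cRL cLL al be :: complex
  assumes U: "unitary2 cRR cLR cRL cLL" and nz: "cRR \<noteq> 0"
begin

definition "dl = cis ((Arg cRR + Arg cLL) / 2)"
definition "mu = cis ((Arg cRR - Arg cLL) / 2)"
definition "aa = cnj cLR * dl"

lemma u1: "(cmod cRR)^2 + (cmod cRL)^2 = 1"
proof -
  have "cnj cRR * cRR + cnj cRL * cRL = 1" using U by (simp add: unitary2_def)
  then have "complex_of_real ((cmod cRR)^2 + (cmod cRL)^2) = 1" by (simp add: cnj_mult_self)
  then show ?thesis by (simp only: of_real_eq_1_iff)
qed

lemma u2: "(cmod cLR)^2 + (cmod cLL)^2 = 1"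
proof -
  have "cnj cLR * cLR + cnj cLL * cLL = 1" using U by (simp add: unitary2_def)
  then have "complex_of_real ((cmod cLR)^2 + (cmod cLL)^2) = 1" by (simp add: cnj_mult_self)
  then show ?thesis by (simp only: of_real_eq_1_iff)
qed

lemma u3: "cmod cRR * cmod cLR = cmod cRL * cmod cLL"
proof -
  have "cnj cRR * cLR = - (cnj cRL * cLL)" using U by (simp add: unitary2_def eq_neg_iff_add_eq_0)
  then have "cmod (cnj cRR * cLR) = cmod (cnj cRL * cLL)" by (metis norm_minus_cancel)
  then show ?thesis by (simp add: norm_mult)
qed

lemma nLL: "cmod cLL = cmod cRR"
  using real_unit_aux(1)[OF u1 u2 u3] by simp

lemma nLR: "cmod cLR = cmod cRL"
  using real_unit_aux(2)[OF u1 u2 u3] by simp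

lemma norm_dl: "cmod dl = 1" by (simp add: dl_def)
lemma norm_mu: "cmod mu = 1" by (simp add: mu_def)
lemma dl_cnj: "cnj dl * dl = 1" by (simp add: dl_def cis_cnj cis_mult)
lemma mu_cnj: "cnj mu * mu = 1" by (simp add: mu_def cis_cnj cis_mult)

lemma norm_aa: "cmod aa = cmod cLR" by (simp add: aa_def norm_mult norm_dl)

lemma aa_lt: "cmod aa < 1"
proof -
  have "(cmod cLR)^2 = 1 - (cmod cRR)^2" using u2 nLL by simp
  moreover have "cmod cRR > 0" using nz by simp
  ultimately have "(cmod cLR)^2 < 1" by simp
  then show ?thesis unfolding norm_aa by (simp add: power_less_one_iff abs_less_iff)
qed

lemma cr_aa: "cr aa = cmod cRR"
proof -
  have "1 - (cmod aa)^2 = (cmod cRR)^2" unfolding norm_aa using u2 nLL by simp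
  then show ?thesis by (simp add: cr_def)
qed

definition "r0 = cmod cRR"
abbreviation "cc0 \<equiv> complex_of_real r0"

lemma cRR_eq: "cRR = cc0 * dl * mu"
proof -
  have "cRR = rcis (cmod cRR) (Arg cRR)" by (simp add: rcis_cmod_Arg)
  also have "\<dots> = cc0 * cis (Arg cRR)" by (simp add: rcis_def r0_def)
  also have "cis (Arg cRR) = dl * mu" unfolding dl_def mu_def cis_mult by (simp add: field_simps)
  finally show ?thesis by (simp add: mult_ac)
qed

lemma cLL_eq: "cLL = cc0 * dl * cnj mu"
proof -
  have "cLL = rcis (cmod cLL) (Arg cLL)" by (simp add: rcis_cmod_Arg)
  also have "\<dots> = cc0 * cis (Arg cLL)" by (simp add: rcis_def nLL r0_def)
  also have "cis (Arg cLL) = dl * cnj mu" unfolding dl_def mu_def cis_cnj cis_mult by (simp add: field_simps)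
  finally show ?thesis by (simp add: mult_ac)
qed

lemma cLR_eq: "cLR = cnj aa * dl"
  unfolding aa_def using dl_cnj by (simp add: mult_ac)

lemma cRL_eq: "cRL = - aa * dl"
proof (rule cRL_gen[OF cRR_eq cLL_eq aa_def _ dl_cnj mu_cnj])
  show "cnj cLL * cRL = - (cnj cLR * cRR)" using U by (simp add: unitary2_def eq_neg_iff_add_eq_0 mult.commute add.commute)
  show "r0 \<noteq> 0" using nz by (simp add: r0_def)
qed

abbreviation "cqq \<equiv> complex_of_real (cr aa)"

lemma mu_nz: "mu \<noteq> 0" using norm_mu by auto

lemma cnj_mu: "cnj mu = 1 / mu"
  using mu_cnj mu_nz by (simp add: field_simps)

lemma cLL_eq': "cLL = cc0 * dl / mu"
proof -
  have "cc0 * dl * cnj mu = cc0 * dl / mu" by (simp add: cnj_mu)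
  with cLL_eq show ?thesis by (rule trans)
qed

lemma gauge:
  "(typeI_step cRR cLR cRL cLL ^^ t) (typeI_init al be)
    = (\<lambda>x b. dl ^ t * mu ^ (if b then x else Suc x) * amp aa cqq al (be / mu) t x b)"
proof -
  have cqq: "cqq = cc0" by (simp add: cr_aa r0_def)
  show ?thesis unfolding cqq by (rule gauge_gen[OF cRR_eq cLL_eq' cLR_eq cRL_eq mu_nz])
qed
end


context
  fixes cRR cLR cRL cLL al be :: complex
  assumes U: "unitary2 cRR cLR cRL cLL" and nz: "cRR \<noteq> 0"
begin

lemma final_ctx:
  "let \<sigma>R = Arg cRR; \<sigma>L = Arg cLL;
       sqrt\<Delta> = exp (\<i> * complex_of_real ((\<sigma>R + \<sigma>L) / 2));
       a = cnj cLR * sqrt\<Delta>;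
       \<phi> = (\<sigma>R - \<sigma>L) / 2;
       \<nu> = nu_I a
   in (\<lambda>t. typeI_prob cRR cLR cRL cLL al be t x) \<longlonglongrightarrow>
        (Re a)\<^sup>2 / (1 - (Im a)\<^sup>2)
        * (cmod (al * exp (\<i> * complex_of_real (\<phi> / 2))
                 + be * exp (- \<i> * complex_of_real (\<phi> / 2)) * complex_of_real \<nu>))\<^sup>2
        * (1 + \<nu>\<^sup>2) * \<nu> ^ (2 * x)"
proof -
  let ?dl = "dl cRR cLL"
  let ?mu = "mu cRR cLL"
  let ?a = "aa cRR cLR cLL"
  define ph where "ph = (Arg cRR - Arg cLL) / 2"
  define h where "h = cis (ph / 2)"
  have sd: "exp (\<i> * complex_of_real ((Arg cRR + Arg cLL) / 2)) = ?dl"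
    by (simp add: dl_def[OF U nz] cis_conv_exp)
  have a_eq: "cnj cLR * ?dl = ?a" by (simp add: aa_def[OF U nz])
  have h1: "exp (\<i> * complex_of_real (ph / 2)) = h" by (simp add: h_def cis_conv_exp)
  have h2: "exp (- \<i> * complex_of_real (ph / 2)) = 1 / h"
  proof -
    have "exp (- \<i> * complex_of_real (ph / 2)) = cis (- (ph / 2))" by (simp add: cis_conv_exp)
    also have "\<dots> = 1 / h" unfolding h_def using cis_divide[of 0 "ph / 2"] by simp
    finally show ?thesis .
  qed
  have hmu: "?mu = h * h" unfolding h_def mu_def[OF U nz] ph_def cis_mult by simp
  have hnz: "h \<noteq> 0" by (simp add: h_def)
  have nh: "cmod h = 1" by (simp add: h_def)
  have prob: "typeI_prob cRR cLR cRL cLL al be t x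
     = (cmod (amp ?a (complex_of_real (cr ?a)) al (be / ?mu) t x True))\<^sup>2
       + (cmod (amp ?a (complex_of_real (cr ?a)) al (be / ?mu) t x False))\<^sup>2" for t
    unfolding typeI_prob_def Let_def gauge[OF U nz]
    by (simp add: norm_mult norm_power norm_dl[OF U nz] norm_mu[OF U nz])
  have lim: "(\<lambda>t. typeI_prob cRR cLR cRL cLL al be t x) \<longlonglongrightarrow>
      (Re ?a)\<^sup>2 / (1 - (Im ?a)\<^sup>2) * (cmod (al + complex_of_real (nu_I ?a) * (be / ?mu)))\<^sup>2
          * (1 + (nu_I ?a)\<^sup>2) * nu_I ?a ^ (2 * x)"
    unfolding prob by (rule simp_limit[OF aa_lt[OF U nz]])
  have "cmod (al * h + be * (1 / h) * complex_of_real (nu_I ?a))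
      = cmod (h * (al + complex_of_real (nu_I ?a) * (be / ?mu)))"
  proof -
    have "al * h + be * (1 / h) * complex_of_real (nu_I ?a) = h * (al + complex_of_real (nu_I ?a) * (be / (h * h)))"
      using hnz by (simp add: field_simps power2_eq_square)
    then show ?thesis unfolding hmu by simp
  qed
  also have "\<dots> = cmod (al + complex_of_real (nu_I ?a) * (be / ?mu))" by (simp add: norm_mult nh)
  finally have nm: "cmod (al * h + be * (1 / h) * complex_of_real (nu_I ?a))
      = cmod (al + complex_of_real (nu_I ?a) * (be / ?mu))" .
  show ?thesis
    unfolding Let_def sd a_eq ph_def[symmetric] h1 h2 nm using lim .
qed

end

theorem theorem1:
  fixes cRR cLR cRL cLL \<alpha> \<beta> :: complex and x :: nat
  assumes "unitary2 cRR cLR cRL cLL"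
    and "cRR \<noteq> 0"
    and "(cmod \<alpha>)\<^sup>2 + (cmod \<beta>)\<^sup>2 = 1"
  shows "let \<sigma>R = Arg cRR; \<sigma>L = Arg cLL;
             sqrt\<Delta> = exp (\<i> * complex_of_real ((\<sigma>R + \<sigma>L) / 2));
             a = cnj cLR * sqrt\<Delta>;
             \<phi> = (\<sigma>R - \<sigma>L) / 2;
             \<nu> = nu_I a
         in (\<lambda>t. typeI_prob cRR cLR cRL cLL \<alpha> \<beta> t x) \<longlonglongrightarrow>
              (Re a)\<^sup>2 / (1 - (Im a)\<^sup>2)
              * (cmod (\<alpha> * exp (\<i> * complex_of_real (\<phi> / 2))
                       + \<beta> * exp (- \<i> * complex_of_real (\<phi> / 2)) * complex_of_real \<nu>))\<^sup>2
              * (1 + \<nu>\<^sup>2) * \<nu> ^ (2 * x)"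
  by (rule final_ctx[OF assms(1,2)])


end
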